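(* Let $V$ be a vector space over a field $K$ of characteristic zero and $\mathrm{Dend}(V)$ the free dendriform algebra on $V$. Then $H^{Dend}_1(\mathrm{Dend}(V))\cong V$ and $H^{Dend}_n(\mathrm{Dend}(V))=0$ for all $n>1$.
   Context: A dendriform algebra is a vector space $E$ with bilinear $\prec,\succ$ satisfying (i) $(a\prec b)\prec c=a\prec(b\prec c)+a\prec(b\succ c)$, (ii) $(a\succ b)\prec c=a\succ(b\prec c)$, (iii) $(a\prec b)\succ c+(a\succ b)\succ c=a\succ(b\succ c)$; $a*b:=a\prec b+a\succ b$. Its chain complex: $C^{Dend}_n(E)=K[\{1,\dots,n\}]\otimes E^{\otimes n}$ with $d=-\sum_{i=1}^{n-1}(-1)^id_i$, where $d_i(r\otimes x_1\otimes\cdots\otimes x_n)=d_i(r)\otimes x_1\otimes\cdots\otimes(x_i\circ_i^rx_{i+1})\otimes\cdots\otimes x_n$, with $d_i(r)=r-1$ if $i\le r-1$, $d_i(r)=r$ if $i\ge r$, and $\circ_i^r=*$ if $i<r-1$ or $i>r$, $\circ_i^r=\succ$ if $i=r-1$, $\circ_i^r=\prec$ if $i=r$. $H^{Dend}_n(E)$ is the $n$-th homology of this complex ($n\ge1$). The free dendriform algebra $\mathrm{Dend}(V)$ is characterized by the usual universal property with respect to linear maps from $V$ (it is $\bigoplus_{n\ge1}K[Y_n]\otimes V^{\otimes n}$, $Y_n$ the planar binary trees with $n$ internal vertices). *)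

theory Defs
  imports Main "HOL-Library.Poly_Mapping" "HOL-Library.Tree"
begin

text \<open>A vector space over the field 'k with basis indexed by a set S :: 'a set is modelled
  as the subspace  fspan S = { p :: 'a =>0 'k . Poly_Mapping.keys p <= S }  of the free vector space.\<close>

definition smult :: "'k::comm_ring_1 \<Rightarrow> ('a \<Rightarrow>\<^sub>0 'k) \<Rightarrow> ('a \<Rightarrow>\<^sub>0 'k)" where
  "smult c p = Poly_Mapping.map (\<lambda>x. c * x) p"

definition fspan :: "'a set \<Rightarrow> ('a \<Rightarrow>\<^sub>0 'k::zero) set" where
  "fspan S = {p. Poly_Mapping.keys p \<subseteq> S}"

definition lin_ext :: "('a \<Rightarrow> ('c \<Rightarrow>\<^sub>0 'k::comm_ring_1)) \<Rightarrow> ('a \<Rightarrow>\<^sub>0 'k) \<Rightarrow> ('c \<Rightarrow>\<^sub>0 'k)" where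
  "lin_ext g p = (\<Sum>t\<in>Poly_Mapping.keys p. smult (Poly_Mapping.lookup p t) (g t))"

definition linear_on :: "('a \<Rightarrow>\<^sub>0 'k::comm_ring_1) set \<Rightarrow> (('a \<Rightarrow>\<^sub>0 'k) \<Rightarrow> ('c \<Rightarrow>\<^sub>0 'k)) \<Rightarrow> bool" where
  "linear_on S f \<longleftrightarrow> (\<forall>x\<in>S. \<forall>y\<in>S. f (x + y) = f x + f y) \<and> (\<forall>c. \<forall>x\<in>S. f (smult c x) = smult c (f x))"

text \<open>A (dendriform) algebra E with basis indexed by Bas :: 'e set is given by the structure
  maps prec, succ on basis elements (extended bilinearly).
  C_n(E) = K[{1..n}] (x) E^{(x)n} has basis {1..n} x Bas^n, basis element (r, [x_1,...,x_n]).\<close>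

definition dend_C :: "'e set \<Rightarrow> nat \<Rightarrow> ((nat \<times> 'e list) \<Rightarrow>\<^sub>0 'k::zero) set" where
  "dend_C Bas n = fspan {(r, xs). 1 \<le> r \<and> r \<le> n \<and> length xs = n \<and> set xs \<subseteq> Bas}"

definition dend_circ ::
  "('e \<Rightarrow> 'e \<Rightarrow> ('e \<Rightarrow>\<^sub>0 'k::comm_ring_1)) \<Rightarrow> ('e \<Rightarrow> 'e \<Rightarrow> ('e \<Rightarrow>\<^sub>0 'k)) \<Rightarrow> nat \<Rightarrow> nat \<Rightarrow> 'e \<Rightarrow> 'e \<Rightarrow> ('e \<Rightarrow>\<^sub>0 'k)" where
  "dend_circ prec succ i r a b =
     (if i + 1 = r then succ a b
      else if i = r then prec a b
      else prec a b + succ a b)"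

definition dend_di_r :: "nat \<Rightarrow> nat \<Rightarrow> nat" where
  "dend_di_r i r = (if i + 1 \<le> r then r - 1 else r)"

text \<open>The face map d_i on a basis element (r, [x_1,...,x_n]), 1 <= i <= n-1
  (list positions are 0-based, so x_i = xs ! (i-1)).\<close>
definition dend_face ::
  "('e \<Rightarrow> 'e \<Rightarrow> ('e \<Rightarrow>\<^sub>0 'k::comm_ring_1)) \<Rightarrow> ('e \<Rightarrow> 'e \<Rightarrow> ('e \<Rightarrow>\<^sub>0 'k)) \<Rightarrow> nat \<Rightarrow> nat \<times> 'e list \<Rightarrow> ((nat \<times> 'e list) \<Rightarrow>\<^sub>0 'k)" where
  "dend_face prec succ i rx =
     (case rx of (r, xs) \<Rightarrow>
        lin_ext (\<lambda>t. Poly_Mapping.single (dend_di_r i r, take (i - 1) xs @ t # drop (i + 1) xs) 1)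
                (dend_circ prec succ i r (xs ! (i - 1)) (xs ! i)))"

definition dend_d_basis ::
  "('e \<Rightarrow> 'e \<Rightarrow> ('e \<Rightarrow>\<^sub>0 'k::comm_ring_1)) \<Rightarrow> ('e \<Rightarrow> 'e \<Rightarrow> ('e \<Rightarrow>\<^sub>0 'k)) \<Rightarrow> nat \<times> 'e list \<Rightarrow> ((nat \<times> 'e list) \<Rightarrow>\<^sub>0 'k)" where
  "dend_d_basis prec succ rx =
     - (\<Sum>i\<in>{1..<length (snd rx)}. smult ((-1) ^ i) (dend_face prec succ i rx))"

definition dend_d ::
  "('e \<Rightarrow> 'e \<Rightarrow> ('e \<Rightarrow>\<^sub>0 'k::comm_ring_1)) \<Rightarrow> ('e \<Rightarrow> 'e \<Rightarrow> ('e \<Rightarrow>\<^sub>0 'k)) \<Rightarrow> ((nat \<times> 'e list) \<Rightarrow>\<^sub>0 'k) \<Rightarrow> ((nat \<times> 'e list) \<Rightarrow>\<^sub>0 'k)" where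
  "dend_d prec succ = lin_ext (dend_d_basis prec succ)"

text \<open>n-cycles and n-boundaries; H_n = Z_n / B_n.\<close>
definition dend_Z where
  "dend_Z Bas prec succ n = {c \<in> dend_C Bas n. dend_d prec succ c = 0}"

definition dend_B where
  "dend_B Bas prec succ n = dend_d prec succ ` dend_C Bas (Suc n)"

text \<open>V has basis B :: 'b set.  Dend(V) = (+)_{n>=1} K[Y_n] (x) V^{(x)n} has as basis the planar
  binary trees with n >= 1 internal vertices, the internal vertices decorated (read in order)
  by the basis elements x_1 ... x_n of V.  With t = t^l \/ t^r the grafting (new root),
  Loday's formulas:  t < s = t^l \/ (t^r * s),  t > s = (t * s^l) \/ s^r,
  where * = < + > and the one-leaf tree | is a unit for *.\<close>

definition graft_map :: "('a tree \<Rightarrow> 'a tree) \<Rightarrow> ('a tree \<Rightarrow>\<^sub>0 'k::comm_ring_1) \<Rightarrow> ('a tree \<Rightarrow>\<^sub>0 'k)" where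
  "graft_map f = lin_ext (\<lambda>t. Poly_Mapping.single (f t) 1)"

fun dtree_star :: "'a tree \<Rightarrow> 'a tree \<Rightarrow> ('a tree \<Rightarrow>\<^sub>0 'k::comm_ring_1)" where
  "dtree_star Leaf y = Poly_Mapping.single y 1"
| "dtree_star (Node l a r) Leaf = Poly_Mapping.single (Node l a r) 1"
| "dtree_star (Node l a r) (Node l' b r') =
     graft_map (\<lambda>t. Node l a t) (dtree_star r (Node l' b r'))
   + graft_map (\<lambda>t. Node t b r') (dtree_star (Node l a r) l')"

definition dtree_prec :: "'a tree \<Rightarrow> 'a tree \<Rightarrow> ('a tree \<Rightarrow>\<^sub>0 'k::comm_ring_1)" where
  "dtree_prec x y = (case x of Leaf \<Rightarrow> 0 | Node l a r \<Rightarrow> graft_map (\<lambda>t. Node l a t) (dtree_star r y))"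

definition dtree_succ :: "'a tree \<Rightarrow> 'a tree \<Rightarrow> ('a tree \<Rightarrow>\<^sub>0 'k::comm_ring_1)" where
  "dtree_succ x y = (case y of Leaf \<Rightarrow> 0 | Node l b r \<Rightarrow> graft_map (\<lambda>t. Node t b r) (dtree_star x l))"

definition dend_basis :: "'b set \<Rightarrow> 'b tree set" where
  "dend_basis B = {t. t \<noteq> Leaf \<and> set_tree t \<subseteq> B}"

end

theory Submission
  imports Defs
begin


abbreviation lk where "lk \<equiv> Poly_Mapping.lookup"
abbreviation ks where "ks \<equiv> Poly_Mapping.keys"


lemma lookup_smult [simp]: "lk (smult c p) x = c * lk p x"
  unfolding smult_def by transfer (simp add: when_def)

lemma smult_add_right: "smult c (p + q) = smult c p + smult c q"
  by (rule poly_mapping_eqI) (simp add: lookup_add algebra_simps)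
lemma smult_add_left: "smult (c + d) p = smult c p + smult d p"
  by (rule poly_mapping_eqI) (simp add: lookup_add algebra_simps)
lemma smult_smult [simp]: "smult c (smult d p) = smult (c * d) p"
  by (rule poly_mapping_eqI) (simp add: algebra_simps)
lemma smult_one [simp]: "smult 1 p = p"
  by (rule poly_mapping_eqI) simp
lemma smult_zero_left [simp]: "smult 0 p = 0"
  by (rule poly_mapping_eqI) simp
lemma smult_zero_right [simp]: "smult c 0 = 0"
  by (rule poly_mapping_eqI) simp
lemma smult_uminus_right: "smult c (- p) = - smult c p"
  by (rule poly_mapping_eqI) simp
lemma smult_uminus_left: "smult (- c) p = - smult c p"
  by (rule poly_mapping_eqI) simp
lemma smult_minus_one [simp]: "smult (-1) p = - p"
  by (rule poly_mapping_eqI) simp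
lemma smult_sum: "smult c (sum f I) = (\<Sum>i\<in>I. smult c (f i))"
  by (rule poly_mapping_eqI) (simp add: lookup_sum sum_distrib_left)
lemma smult_single: "smult c (Poly_Mapping.single t d) = Poly_Mapping.single t (c * d)"
  by (rule poly_mapping_eqI) (simp add: lookup_single when_def)
lemma keys_smult: "ks (smult c p) \<subseteq> ks p"
  by (auto simp: in_keys_iff)

lemma lin_ext_superset:
  assumes "finite S" "ks p \<subseteq> S"
  shows "lin_ext g p = (\<Sum>t\<in>S. smult (lk p t) (g t))"
  unfolding lin_ext_def
  by (rule sum.mono_neutral_left) (use assms in \<open>auto simp: in_keys_iff\<close>)

lemma lin_ext_add: "lin_ext g (p + q) = lin_ext g p + lin_ext g q"
proof -
  let ?S = "ks p \<union> ks q"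
  have "ks (p + q) \<subseteq> ?S" by (rule keys_add)
  then have "lin_ext g (p + q) = (\<Sum>t\<in>?S. smult (lk (p+q) t) (g t))"
    by (intro lin_ext_superset) auto
  also have "\<dots> = (\<Sum>t\<in>?S. smult (lk p t) (g t)) + (\<Sum>t\<in>?S. smult (lk q t) (g t))"
    by (simp add: lookup_add smult_add_left sum.distrib)
  also have "\<dots> = lin_ext g p + lin_ext g q"
    by (subst (1 2) lin_ext_superset[where S="?S"]) auto
  finally show ?thesis .
qed

lemma lin_ext_zero [simp]: "lin_ext g 0 = 0"
  by (simp add: lin_ext_def)

lemma lin_ext_smult: "lin_ext g (smult c p) = smult c (lin_ext g p)"
proof -
  have "lin_ext g (smult c p) = (\<Sum>t\<in>ks p. smult (lk (smult c p) t) (g t))"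
    by (rule lin_ext_superset) (auto simp: in_keys_iff)
  then show ?thesis by (simp add: lin_ext_def smult_sum)
qed

lemma lin_ext_uminus: "lin_ext g (- p) = - lin_ext g p"
  using lin_ext_smult[of g "-1" p] by simp

lemma lin_ext_diff: "lin_ext g (p - q) = lin_ext g p - lin_ext g q"
  using lin_ext_add[of g p "-q"] by (simp add: lin_ext_uminus)

lemma lin_ext_sum: "lin_ext g (sum f I) = (\<Sum>i\<in>I. lin_ext g (f i))"
  by (induction I rule: infinite_finite_induct) (auto simp: lin_ext_add)

lemma lin_ext_single [simp]: "lin_ext g (Poly_Mapping.single t c) = smult c (g t)"
  by (cases "c = 0") (auto simp: lin_ext_def)

lemma lin_ext_cong: "(\<And>t. t \<in> ks p \<Longrightarrow> f t = g t) \<Longrightarrow> lin_ext f p = lin_ext g p"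
  by (simp add: lin_ext_def)

lemma lin_ext_fun_add: "lin_ext (\<lambda>t. f t + g t) p = lin_ext f p + lin_ext g p"
  by (simp add: lin_ext_def smult_add_right sum.distrib)

lemma lin_ext_fun_smult: "lin_ext (\<lambda>t. smult c (f t)) p = smult c (lin_ext f p)"
  by (simp add: lin_ext_def smult_sum mult.commute)

lemma lin_ext_fun_uminus: "lin_ext (\<lambda>t. - f t) p = - lin_ext f p"
  using lin_ext_fun_smult[of "-1" f p] by simp

lemma lin_ext_fun_zero [simp]: "lin_ext (\<lambda>t. 0) p = 0"
  by (simp add: lin_ext_def)

lemma lin_ext_fun_sum: "lin_ext (\<lambda>t. \<Sum>i\<in>I. f i t) p = (\<Sum>i\<in>I. lin_ext (f i) p)"
  by (induction I rule: infinite_finite_induct) (auto simp: lin_ext_fun_add)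

lemma lin_ext_comp: "lin_ext f (lin_ext g p) = lin_ext (\<lambda>t. lin_ext f (g t)) p"
proof -
  have "lin_ext f (lin_ext g p) = (\<Sum>t\<in>ks p. smult (lk p t) (lin_ext f (g t)))"
    by (simp only: lin_ext_def[of g] lin_ext_sum lin_ext_smult)
  also have "\<dots> = lin_ext (\<lambda>t. lin_ext f (g t)) p"
    by (simp only: lin_ext_def[of "\<lambda>t. lin_ext f (g t)"])
  finally show ?thesis .
qed

lemma lin_ext_id: "lin_ext (\<lambda>t. Poly_Mapping.single t 1) p = p"
proof (rule poly_mapping_eqI)
  fix x
  have "lk (lin_ext (\<lambda>t. Poly_Mapping.single t 1) p) x = (\<Sum>t\<in>ks p. lk p t * (if t = x then 1 else 0))"
    by (simp add: lin_ext_def lookup_sum lookup_single when_def)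
  also have "\<dots> = (\<Sum>t\<in>ks p. if t = x then lk p x else 0)"
    by (rule sum.cong) auto
  also have "\<dots> = lk p x" by (simp add: in_keys_iff)
  finally show "lk (lin_ext (\<lambda>t. Poly_Mapping.single t 1) p) x = lk p x" .
qed

lemma keys_lin_ext: "ks (lin_ext g p) \<subseteq> (\<Union>t\<in>ks p. ks (g t))"
proof -
  have "ks (lin_ext g p) \<subseteq> (\<Union>t\<in>ks p. ks (smult (lk p t) (g t)))"
    unfolding lin_ext_def by (rule keys_sum)
  also have "\<dots> \<subseteq> (\<Union>t\<in>ks p. ks (g t))"
    by (rule UN_mono) (auto intro: keys_smult[THEN subsetD])
  finally show ?thesis .
qed

lemma lin_ext_swap:
  "lin_ext (\<lambda>t. lin_ext (\<lambda>s. F t s) q) p = lin_ext (\<lambda>s. lin_ext (\<lambda>t. F t s) p) q"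
proof -
  have "lin_ext (\<lambda>t. lin_ext (\<lambda>s. F t s) q) p = (\<Sum>t\<in>ks p. \<Sum>s\<in>ks q. smult (lk p t * lk q s) (F t s))"
    by (simp only: lin_ext_def smult_sum smult_smult)
  also have "\<dots> = (\<Sum>s\<in>ks q. \<Sum>t\<in>ks p. smult (lk q s * lk p t) (F t s))"
    by (subst sum.swap) (simp only: mult.commute)
  also have "\<dots> = lin_ext (\<lambda>s. lin_ext (\<lambda>t. F t s) p) q"
    by (simp only: lin_ext_def smult_sum smult_smult)
  finally show ?thesis .
qed



lemma graft_lin_ext: "lin_ext h (graft_map f p) = lin_ext (\<lambda>t. h (f t)) p"
  unfolding graft_map_def lin_ext_comp by simp

lemma lin_ext_graft: "graft_map f (lin_ext g p) = lin_ext (\<lambda>t. graft_map f (g t)) p"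
  unfolding graft_map_def lin_ext_comp ..

lemma graft_single [simp]: "graft_map f (Poly_Mapping.single t c) = Poly_Mapping.single (f t) c"
  unfolding graft_map_def by (simp add: smult_single)

lemma graft_add: "graft_map f (p + q) = graft_map f p + graft_map f q"
  unfolding graft_map_def by (rule lin_ext_add)

lemma star_Leaf_left [simp]: "dtree_star Leaf y = Poly_Mapping.single y 1"
  by simp

lemma star_Leaf_fun [simp]: "dtree_star Leaf = (\<lambda>y. Poly_Mapping.single y 1)"
  by (rule ext) simp

lemma star_Leaf_right [simp]: "dtree_star x Leaf = Poly_Mapping.single x 1"
  by (cases x) auto

lemma prec_Node: "dtree_prec (Node l a r) y = graft_map (Node l a) (dtree_star r y)"
  by (simp add: dtree_prec_def)

lemma succ_Node: "dtree_succ x (Node l b r) = graft_map (\<lambda>t. Node t b r) (dtree_star x l)"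
  by (simp add: dtree_succ_def)

lemma prec_Leaf [simp]: "dtree_prec Leaf y = 0"
  by (simp add: dtree_prec_def)

lemma succ_Leaf [simp]: "dtree_succ x Leaf = 0"
  by (simp add: dtree_succ_def)

lemma star_split: "x \<noteq> Leaf \<or> y \<noteq> Leaf \<Longrightarrow> dtree_star x y = dtree_prec x y + dtree_succ x y"
proof (cases x; cases y)
  fix l a r assume "x = Node l a r" "y = Leaf"
  then show ?thesis by (simp add: prec_Node)
next
  fix l a r assume "x = Leaf" "y = Node l a r"
  then show ?thesis by (simp add: succ_Node)
next
  fix l a r l' b r' assume "x = Node l a r" "y = Node l' b r'"
  then show ?thesis by (simp add: prec_Node succ_Node)
qed auto

lemma lin_star_right_Node:
  "lin_ext (\<lambda>w. dtree_star w (Node l c r)) p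
     = lin_ext (\<lambda>w. dtree_prec w (Node l c r)) p + lin_ext (\<lambda>w. dtree_succ w (Node l c r)) p"
  by (subst star_split) (auto simp: lin_ext_fun_add)

lemma lin_star_left_Node:
  "lin_ext (\<lambda>w. dtree_star (Node l a r) w) p
     = lin_ext (\<lambda>w. dtree_prec (Node l a r) w) p + lin_ext (\<lambda>w. dtree_succ (Node l a r) w) p"
  by (subst star_split) (auto simp: lin_ext_fun_add)

definition N2 :: "'b \<Rightarrow> ('b tree \<Rightarrow>\<^sub>0 'k::comm_ring_1) \<Rightarrow> ('b tree \<Rightarrow>\<^sub>0 'k) \<Rightarrow> ('b tree \<Rightarrow>\<^sub>0 'k)" where
  "N2 b P Q = lin_ext (\<lambda>s. lin_ext (\<lambda>t. Poly_Mapping.single (Node s b t) 1) Q) P"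

lemma S1: "lin_ext (\<lambda>w. dtree_prec w z) (graft_map (Node l a) q) = graft_map (Node l a) (lin_ext (\<lambda>s. dtree_star s z) q)"
  by (simp add: graft_lin_ext lin_ext_graft prec_Node)

lemma S2: "lin_ext (\<lambda>w. dtree_prec w z) (graft_map (\<lambda>t. Node t b r') q) = N2 b q (dtree_star r' z)"
proof -
  have "lin_ext (\<lambda>w. dtree_prec w z) (graft_map (\<lambda>t. Node t b r') q)
      = lin_ext (\<lambda>s. graft_map (Node s b) (dtree_star r' z)) q"
    by (simp add: graft_lin_ext prec_Node)
  also have "\<dots> = N2 b q (dtree_star r' z)"
    by (simp add: graft_map_def N2_def)
  finally show ?thesis .
qed

lemma S3: "lin_ext (\<lambda>w. dtree_succ w (Node l c r)) p = graft_map (\<lambda>t. Node t c r) (lin_ext (\<lambda>w. dtree_star w l) p)"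
  by (simp add: lin_ext_graft succ_Node)

lemma S4: "lin_ext (\<lambda>w. dtree_succ x w) (graft_map (Node l' b) q) = N2 b (dtree_star x l') q"
proof -
  have "lin_ext (\<lambda>w. dtree_succ x w) (graft_map (Node l' b) q)
      = lin_ext (\<lambda>t. graft_map (\<lambda>s. Node s b t) (dtree_star x l')) q"
    by (simp add: graft_lin_ext succ_Node)
  also have "\<dots> = lin_ext (\<lambda>t. lin_ext (\<lambda>s. Poly_Mapping.single (Node s b t) 1) (dtree_star x l')) q"
    by (simp add: graft_map_def)
  also have "\<dots> = N2 b (dtree_star x l') q"
    unfolding N2_def by (rule lin_ext_swap)
  finally show ?thesis .
qed

lemma S5: "lin_ext (\<lambda>w. dtree_succ x w) (graft_map (\<lambda>t. Node t c r) q) = graft_map (\<lambda>t. Node t c r) (lin_ext (\<lambda>s. dtree_star x s) q)"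
  by (simp add: graft_lin_ext lin_ext_graft succ_Node)

lemma S6: "lin_ext (\<lambda>w. dtree_prec (Node l a r) w) p = graft_map (Node l a) (lin_ext (\<lambda>w. dtree_star r w) p)"
  by (simp add: lin_ext_graft prec_Node)

lemma star_assoc:
  "lin_ext (\<lambda>w. dtree_star w z) (dtree_star x y :: 'b tree \<Rightarrow>\<^sub>0 'k::comm_ring_1) = lin_ext (\<lambda>w. dtree_star x w) (dtree_star y z)"
proof (induction "size x + size y + size z" arbitrary: x y z rule: less_induct)
  case less
  show ?case
  proof (cases "x = Leaf \<or> y = Leaf \<or> z = Leaf")
    case True
    then show ?thesis
      by (auto simp: lin_ext_id)
  next
    case False
    then obtain l a r l' b r' l'' c r'' where
      x: "x = Node l a r" and y: "y = Node l' b r'" and z: "z = Node l'' c r''"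
      by (metis tree.exhaust)
    have IH1: "lin_ext (\<lambda>w. dtree_star w z) (dtree_star r y :: 'b tree \<Rightarrow>\<^sub>0 'k) = lin_ext (\<lambda>w. dtree_star r w) (dtree_star y z)"
      using less[of r y z] x by simp
    have IH2: "lin_ext (\<lambda>w. dtree_star w l'') (dtree_star x y :: 'b tree \<Rightarrow>\<^sub>0 'k) = lin_ext (\<lambda>w. dtree_star x w) (dtree_star y l'')"
      using less[of x y l''] z by simp
    have L: "lin_ext (\<lambda>w. dtree_star w z) (dtree_star x y :: 'b tree \<Rightarrow>\<^sub>0 'k)
       = graft_map (Node l a) (lin_ext (\<lambda>w. dtree_star r w) (dtree_star y z))
         + N2 b (dtree_star x l') (dtree_star r' z)
         + graft_map (\<lambda>t. Node t c r'') (lin_ext (\<lambda>w. dtree_star x w) (dtree_star y l''))"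
      (is "_ = ?A + ?N + ?C")
    proof -
      have e1: "lin_ext (\<lambda>w. dtree_star w z) (dtree_star x y :: 'b tree \<Rightarrow>\<^sub>0 'k)
         = lin_ext (\<lambda>w. dtree_prec w z) (dtree_star x y) + lin_ext (\<lambda>w. dtree_succ w z) (dtree_star x y)"
        by (simp only: z lin_star_right_Node)
      have e2: "lin_ext (\<lambda>w. dtree_succ w z) (dtree_star x y :: 'b tree \<Rightarrow>\<^sub>0 'k) = ?C"
        by (simp only: z S3 IH2[unfolded z])
      have e3: "lin_ext (\<lambda>w. dtree_prec w z) (dtree_star x y :: 'b tree \<Rightarrow>\<^sub>0 'k) = ?A + ?N"
        apply (subst star_split, simp add: x)
        apply (simp only: lin_ext_add x y prec_Node succ_Node S1 S2)
        apply (simp only: IH1[unfolded x y])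
        done
      show ?thesis by (simp only: e1 e2 e3)
    qed
    have R: "lin_ext (\<lambda>w. dtree_star x w) (dtree_star y z :: 'b tree \<Rightarrow>\<^sub>0 'k)
       = graft_map (Node l a) (lin_ext (\<lambda>w. dtree_star r w) (dtree_star y z))
         + N2 b (dtree_star x l') (dtree_star r' z)
         + graft_map (\<lambda>t. Node t c r'') (lin_ext (\<lambda>w. dtree_star x w) (dtree_star y l''))"
      (is "_ = ?A + ?N + ?C")
    proof -
      have f1: "lin_ext (\<lambda>w. dtree_star x w) (dtree_star y z :: 'b tree \<Rightarrow>\<^sub>0 'k)
         = lin_ext (\<lambda>w. dtree_prec x w) (dtree_star y z) + lin_ext (\<lambda>w. dtree_succ x w) (dtree_star y z)"
        by (simp only: x lin_star_left_Node)
      have f2: "lin_ext (\<lambda>w. dtree_prec x w) (dtree_star y z :: 'b tree \<Rightarrow>\<^sub>0 'k) = ?A"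
        by (simp only: x S6)
      have f3: "lin_ext (\<lambda>w. dtree_succ x w) (dtree_star y z :: 'b tree \<Rightarrow>\<^sub>0 'k) = ?N + ?C"
        apply (subst star_split, simp add: y)
        apply (simp only: lin_ext_add y z prec_Node succ_Node S4 S5)
        done
      show ?thesis by (simp only: f1 f2 f3 add.assoc)
    qed
    show ?thesis using L R by simp
  qed
qed



lemma simplicial_sum:
  fixes G :: "nat \<Rightarrow> nat \<Rightarrow> 'a::ab_group_add"
  assumes "\<And>i j. 1 \<le> i \<Longrightarrow> i < j \<Longrightarrow> j < n \<Longrightarrow> G i j = G (j - 1) i"
  shows "(\<Sum>(i,j)\<in>{1..<n-1}\<times>{1..<n}. if even (i + j) then G i j else - G i j) = 0"
proof -
  define f where "f = (\<lambda>(i,j). if even (i + j) then G i j else - G i j)"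
  let ?P = "{1..<n-1}\<times>{1..<n}"
  let ?P1 = "{p\<in>?P. fst p < snd p}"
  let ?P2 = "{p\<in>?P. \<not> fst p < snd p}"
  have fin: "finite ?P" by simp
  have split: "sum f ?P = sum f ?P1 + sum f ?P2"
  proof -
    have "?P = ?P1 \<union> ?P2" by auto
    then have "sum f ?P = sum f (?P1 \<union> ?P2)" by simp
    also have "\<dots> = sum f ?P1 + sum f ?P2" by (rule sum.union_disjoint) auto
    finally show ?thesis .
  qed
  have "sum f ?P1 = sum (\<lambda>p. - f p) ?P2"
  proof (rule sum.reindex_bij_witness[where j="\<lambda>(i,j). (j - 1, i)" and i="\<lambda>(i,j). (j, i + 1)"])
    fix a assume "a \<in> ?P1" then show "(\<lambda>(i,j). (j, i + 1)) ((\<lambda>(i,j). (j - 1, i)) a) = a" by auto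
  next
    fix a assume "a \<in> ?P1" then show "(\<lambda>(i,j). (j - 1, i)) a \<in> ?P2" by auto
  next
    fix b assume "b \<in> ?P2" then show "(\<lambda>(i,j). (j - 1, i)) ((\<lambda>(i,j). (j, i + 1)) b) = b" by auto
  next
    fix b assume "b \<in> ?P2" then show "(\<lambda>(i,j). (j, i + 1)) b \<in> ?P1" by auto
  next
    fix a assume a: "a \<in> ?P1"
    then obtain i j where ij: "a = (i, j)" "1 \<le> i" "i < j" "j < n" by auto
    have G: "G i j = G (j - 1) i" using assms ij by auto
    have "even (j - 1 + i) \<longleftrightarrow> \<not> even (i + j)" using ij by auto
    then show "- f ((\<lambda>(i,j). (j - 1, i)) a) = f a"
      using ij G by (auto simp: f_def)
  qed
  also have "\<dots> = - sum f ?P2" by (simp add: sum_negf)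
  finally have "sum f ?P = 0" using split by simp
  then show ?thesis by (simp add: f_def)
qed



definition ins :: "nat \<Rightarrow> 'a list \<Rightarrow> 'a \<Rightarrow> 'a list" where
  "ins i xs t = take (i - 1) xs @ t # drop (i + 1) xs"

lemma length_ins: "1 \<le> i \<Longrightarrow> i < length xs \<Longrightarrow> length (ins i xs t) = length xs - 1"
  by (simp add: ins_def)

lemma nth_ins: "1 \<le> i \<Longrightarrow> i < length xs \<Longrightarrow> k < length xs - 1 \<Longrightarrow>
  ins i xs t ! k = (if k < i - 1 then xs ! k else if k = i - 1 then t else xs ! (k + 1))"
  by (auto simp: ins_def nth_append min_def nth_Cons')

lemma set_ins: "1 \<le> i \<Longrightarrow> i < length xs \<Longrightarrow> set (ins i xs t) \<subseteq> insert t (set xs)"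
  by (auto simp: ins_def dest: in_set_takeD in_set_dropD)

lemma ins_ins_far: "1 \<le> i \<Longrightarrow> i + 1 < j \<Longrightarrow> j < length xs \<Longrightarrow>
  ins i (ins j xs t) s = ins (j - 1) (ins i xs s) t"
  by (rule nth_equalityI) (auto simp: length_ins nth_ins)

definition ins2 :: "nat \<Rightarrow> 'a list \<Rightarrow> 'a \<Rightarrow> 'a list" where
  "ins2 i xs u = take (i - 1) xs @ u # drop (i + 2) xs"

lemma ins_ins_adj1: "1 \<le> i \<Longrightarrow> i + 1 < length xs \<Longrightarrow> ins i (ins (i + 1) xs t) s = ins2 i xs s"
  by (simp add: ins_def ins2_def min_def)

lemma ins_ins_adj2: "1 \<le> i \<Longrightarrow> i + 1 < length xs \<Longrightarrow> ins i (ins i xs t) s = ins2 i xs s"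
  by (simp add: ins_def ins2_def min_def nth_append)

lemma di_far: "1 \<le> i \<Longrightarrow> i + 1 < j \<Longrightarrow> dend_di_r i (dend_di_r j r) = dend_di_r (j - 1) (dend_di_r i r)"
  by (auto simp: dend_di_r_def)

lemma circ_far1: "1 \<le> i \<Longrightarrow> i + 1 < j \<Longrightarrow> dend_circ p s i (dend_di_r j r) = dend_circ p s i r"
  by (rule ext)+ (auto simp: dend_di_r_def dend_circ_def)

lemma circ_far2: "1 \<le> i \<Longrightarrow> i + 1 < j \<Longrightarrow> dend_circ p s (j - 1) (dend_di_r i r) = dend_circ p s j r"
  by (rule ext)+ (auto simp: dend_di_r_def dend_circ_def)

lemma di_adj: "dend_di_r i (dend_di_r (i + 1) r) = dend_di_r i (dend_di_r i r)"
  by (auto simp: dend_di_r_def)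

lemma face_eq: "dend_face p s i (r, xs) =
  lin_ext (\<lambda>t. Poly_Mapping.single (dend_di_r i r, ins i xs t) 1) (dend_circ p s i r (xs ! (i - 1)) (xs ! i))"
  by (simp add: dend_face_def ins_def)

locale dendc =
  fixes prec succ :: "'e \<Rightarrow> 'e \<Rightarrow> ('e \<Rightarrow>\<^sub>0 'k::comm_ring_1)" and N :: "'e set"
  assumes cl_prec: "x \<in> N \<Longrightarrow> y \<in> N \<Longrightarrow> ks (prec x y) \<subseteq> N"
  and cl_succ: "x \<in> N \<Longrightarrow> y \<in> N \<Longrightarrow> ks (succ x y) \<subseteq> N"
  and A0: "x \<in> N \<Longrightarrow> y \<in> N \<Longrightarrow> z \<in> N \<Longrightarrow>
     lin_ext (\<lambda>w. prec w z + succ w z) (prec x y + succ x y) = lin_ext (\<lambda>w. prec x w + succ x w) (prec y z + succ y z)"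
  and A1: "x \<in> N \<Longrightarrow> y \<in> N \<Longrightarrow> z \<in> N \<Longrightarrow>
     lin_ext (\<lambda>w. prec w z) (prec x y) = lin_ext (\<lambda>w. prec x w) (prec y z + succ y z)"
  and A2: "x \<in> N \<Longrightarrow> y \<in> N \<Longrightarrow> z \<in> N \<Longrightarrow>
     lin_ext (\<lambda>w. prec w z) (succ x y) = lin_ext (\<lambda>w. succ x w) (prec y z)"
  and A3: "x \<in> N \<Longrightarrow> y \<in> N \<Longrightarrow> z \<in> N \<Longrightarrow>
     lin_ext (\<lambda>w. succ w z) (prec x y + succ x y) = lin_ext (\<lambda>w. succ x w) (succ y z)"
begin

abbreviation "circ \<equiv> dend_circ prec succ"
abbreviation "face \<equiv> dend_face prec succ"
abbreviation "D \<equiv> dend_d prec succ"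

lemma keys_circ: "a \<in> N \<Longrightarrow> b \<in> N \<Longrightarrow> ks (circ i r a b) \<subseteq> N"
proof -
  assume ab: "a \<in> N" "b \<in> N"
  have "ks (prec a b + succ a b) \<subseteq> N"
    using keys_add[of "prec a b" "succ a b"] cl_prec[OF ab] cl_succ[OF ab] by blast
  then show ?thesis
    unfolding dend_circ_def using cl_prec[OF ab] cl_succ[OF ab] by simp
qed

lemma circ_m2: "i + 1 \<noteq> r \<Longrightarrow> i \<noteq> r \<Longrightarrow> circ i r = (\<lambda>a b. prec a b + succ a b)"
  by (rule ext)+ (simp add: dend_circ_def)
lemma circ_succ: "i + 1 = r \<Longrightarrow> circ i r = succ"
  by (rule ext)+ (simp add: dend_circ_def)
lemma circ_prec: "i = r \<Longrightarrow> circ i r = prec"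
  by (rule ext)+ (simp add: dend_circ_def)

lemma circ_assoc: "a \<in> N \<Longrightarrow> b \<in> N \<Longrightarrow> c \<in> N \<Longrightarrow>
  lin_ext (\<lambda>t. circ i (dend_di_r (i + 1) r) a t) (circ (i + 1) r b c)
  = lin_ext (\<lambda>s. circ i (dend_di_r i r) s c) (circ i r a b)"
proof -
  assume abc: "a \<in> N" "b \<in> N" "c \<in> N"
  consider "r < i" | "r = i" | "r = i + 1" | "r = i + 2" | "r > i + 2" by linarith
  then show ?thesis
  proof cases
    case 1
    then have "dend_di_r (i + 1) r = r" "dend_di_r i r = r" by (auto simp: dend_di_r_def)
    moreover have "circ i r = (\<lambda>a b. prec a b + succ a b)" "circ (i + 1) r = (\<lambda>a b. prec a b + succ a b)"
      using 1 by (auto intro!: circ_m2)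
    ultimately show ?thesis using A0[OF abc] by simp
  next
    case 2
    then have "dend_di_r (i + 1) r = i" "dend_di_r i r = i" by (auto simp: dend_di_r_def)
    moreover have "circ i i = prec" "circ (i + 1) r = (\<lambda>a b. prec a b + succ a b)"
      using 2 by (auto intro!: circ_m2 circ_prec)
    ultimately show ?thesis using A1[OF abc] 2 by simp
  next
    case 3
    then have "dend_di_r (i + 1) r = i + 1" "dend_di_r i r = i" by (auto simp: dend_di_r_def)
    moreover have "circ i (i + 1) = succ" "circ (i + 1) r = prec" "circ i i = prec" "circ i r = succ"
      using 3 by (auto intro!: circ_succ circ_prec)
    ultimately show ?thesis using A2[OF abc] by simp
  next
    case 4
    then have "dend_di_r (i + 1) r = i + 1" "dend_di_r i r = i + 1" by (auto simp: dend_di_r_def)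
    moreover have "circ i (i + 1) = succ" "circ (i + 1) r = succ" "circ i r = (\<lambda>a b. prec a b + succ a b)"
      using 4 by (auto intro!: circ_succ circ_m2)
    ultimately show ?thesis using A3[OF abc] by simp
  next
    case 5
    then have "dend_di_r (i + 1) r = r - 1" "dend_di_r i r = r - 1" by (auto simp: dend_di_r_def)
    moreover have "circ i (r - 1) = (\<lambda>a b. prec a b + succ a b)" "circ (i + 1) r = (\<lambda>a b. prec a b + succ a b)"
      "circ i r = (\<lambda>a b. prec a b + succ a b)"
      using 5 by (auto intro!: circ_m2)
    ultimately show ?thesis using A0[OF abc] by simp
  qed
qed

lemma keys_face: "1 \<le> i \<Longrightarrow> i < length xs \<Longrightarrow> set xs \<subseteq> N \<Longrightarrow> k \<in> ks (face i (r, xs)) \<Longrightarrow>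
   fst k = dend_di_r i r \<and> length (snd k) = length xs - 1 \<and> set (snd k) \<subseteq> N"
proof -
  assume i: "1 \<le> i" "i < length xs" and xs: "set xs \<subseteq> N" and k: "k \<in> ks (face i (r, xs))"
  have ab: "xs ! (i - 1) \<in> N" "xs ! i \<in> N" using i xs by (auto simp: subset_iff)
  from k keys_lin_ext obtain t where t: "t \<in> ks (circ i r (xs ! (i - 1)) (xs ! i))"
      "k = (dend_di_r i r, ins i xs t)"
    unfolding face_eq by fastforce
  have "t \<in> N" using keys_circ[OF ab] t by blast
  then show ?thesis using t i xs set_ins[OF i, of t] by (auto simp: length_ins)
qed

lemma F_face: "lin_ext g (face j (r, xs)) = lin_ext (\<lambda>t. g (dend_di_r j r, ins j xs t)) (circ j r (xs ! (j - 1)) (xs ! j))"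
  unfolding face_eq lin_ext_comp by simp

lemma simplicial_far:
  assumes "1 \<le> i" "i + 1 < j" "j < length xs"
  shows "lin_ext (face i) (face j (r, xs)) = lin_ext (face (j - 1)) (face i (r, xs))"
proof -
  have n1: "ins j xs t ! (i - 1) = xs ! (i - 1)" "ins j xs t ! i = xs ! i" for t
    using assms by (auto simp: nth_ins)
  have j2: "Suc (j - 1 - 1) = j - 1" "\<not> j - 1 - 1 < i - 1" "j - 1 - 1 \<noteq> i - 1" using assms by auto
  have n2: "ins i xs s ! (j - 1 - 1) = xs ! (j - 1)" "ins i xs s ! (j - 1) = xs ! j" for s
    using assms j2 by (auto simp: nth_ins)
  have "lin_ext (face i) (face j (r, xs)) = lin_ext (\<lambda>t. lin_ext (\<lambda>s. Poly_Mapping.single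
        (dend_di_r (j - 1) (dend_di_r i r), ins (j - 1) (ins i xs s) t) 1) (circ i r (xs ! (i - 1)) (xs ! i)))
        (circ j r (xs ! (j - 1)) (xs ! j))"
    unfolding F_face
    by (rule lin_ext_cong) (use assms in \<open>simp add: face_eq n1 n1[simplified] circ_far1 di_far ins_ins_far\<close>)
  also have "\<dots> = lin_ext (\<lambda>s. lin_ext (\<lambda>t. Poly_Mapping.single
        (dend_di_r (j - 1) (dend_di_r i r), ins (j - 1) (ins i xs s) t) 1) (circ j r (xs ! (j - 1)) (xs ! j)))
        (circ i r (xs ! (i - 1)) (xs ! i))"
    by (rule lin_ext_swap)
  also have "\<dots> = lin_ext (face (j - 1)) (face i (r, xs))"
    unfolding F_face
    by (rule lin_ext_cong) (use assms in \<open>simp add: face_eq n2 n2[simplified] circ_far2 circ_far2[simplified]\<close>)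
  finally show ?thesis .
qed

lemma simplicial_adj:
  assumes "1 \<le> i" "i + 1 < length xs" "set xs \<subseteq> N"
  shows "lin_ext (face i) (face (i + 1) (r, xs)) = lin_ext (face i) (face i (r, xs))"
proof -
  have N: "xs ! (i - 1) \<in> N" "xs ! i \<in> N" "xs ! (i + 1) \<in> N" using assms by (auto simp: subset_iff)
  have n1: "ins (i + 1) xs t ! (i - 1) = xs ! (i - 1)" "ins (i + 1) xs t ! i = t" for t
    using assms by (auto simp: nth_ins)
  have n2: "ins i xs s ! (i - 1) = s" "ins i xs s ! i = xs ! (i + 1)" for s
    using assms by (auto simp: nth_ins)
  let ?g = "\<lambda>u. Poly_Mapping.single (dend_di_r i (dend_di_r i r), ins2 i xs u) 1"
  have "lin_ext (face i) (face (i + 1) (r, xs)) = lin_ext (\<lambda>t. lin_ext ?g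
         (circ i (dend_di_r (i + 1) r) (xs ! (i - 1)) t)) (circ (i + 1) r (xs ! i) (xs ! (i + 1)))"
    unfolding F_face add_diff_cancel_right'
    by (rule lin_ext_cong) (use assms in \<open>simp add: face_eq n1 n1[simplified] di_adj di_adj[simplified] ins_ins_adj1 ins_ins_adj1[simplified]\<close>)
  also have "\<dots> = lin_ext ?g (lin_ext (\<lambda>t. circ i (dend_di_r (i + 1) r) (xs ! (i - 1)) t)
       (circ (i + 1) r (xs ! i) (xs ! (i + 1))))"
    by (simp add: lin_ext_comp)
  also have "\<dots> = lin_ext ?g (lin_ext (\<lambda>s. circ i (dend_di_r i r) s (xs ! (i + 1)))
       (circ i r (xs ! (i - 1)) (xs ! i)))"
    using circ_assoc[OF N] by simp
  also have "\<dots> = lin_ext (\<lambda>s. lin_ext ?g (circ i (dend_di_r i r) s (xs ! (i + 1))))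
       (circ i r (xs ! (i - 1)) (xs ! i))"
    by (simp add: lin_ext_comp)
  also have "\<dots> = lin_ext (face i) (face i (r, xs))"
    unfolding F_face
    by (rule lin_ext_cong) (use assms in \<open>simp add: face_eq n2 n2[simplified] ins_ins_adj2\<close>)
  finally show ?thesis .
qed

lemma D_face:
  assumes "1 \<le> j" "j < length xs" "set xs \<subseteq> N"
  shows "D (face j (r, xs)) = - (\<Sum>i\<in>{1..<length xs - 1}. smult ((-1) ^ i) (lin_ext (face i) (face j (r, xs))))"
proof -
  have "D (face j (r, xs)) = lin_ext (\<lambda>k. - (\<Sum>i\<in>{1..<length xs - 1}. smult ((-1) ^ i) (face i k))) (face j (r, xs))"
    unfolding dend_d_def
  proof (rule lin_ext_cong)
    fix k assume "k \<in> ks (face j (r, xs))"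
    with keys_face[OF assms(1,2,3)] have "length (snd k) = length xs - 1" by blast
    then show "dend_d_basis prec succ k = - (\<Sum>i\<in>{1..<length xs - 1}. smult ((-1) ^ i) (face i k))"
      by (simp add: dend_d_basis_def)
  qed
  also have "\<dots> = - (\<Sum>i\<in>{1..<length xs - 1}. smult ((-1) ^ i) (lin_ext (face i) (face j (r, xs))))"
    by (simp add: lin_ext_fun_uminus lin_ext_fun_sum lin_ext_fun_smult)
  finally show ?thesis .
qed

lemma smult_sign: "smult ((-1) ^ j * (-1) ^ i) g = (if even (i + j) then g else - g)"
  by (simp add: power_add[symmetric] add.commute)

lemma DD_basis:
  assumes "set xs \<subseteq> N"
  shows "D (dend_d_basis prec succ (r, xs)) = 0"
proof -
  let ?n = "length xs"
  define G where "G i j = lin_ext (face i) (face j (r, xs))" for i j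
  have "D (dend_d_basis prec succ (r, xs)) = - (\<Sum>j\<in>{1..<?n}. smult ((-1) ^ j) (D (face j (r, xs))))"
    unfolding dend_d_basis_def dend_d_def by (simp add: lin_ext_uminus lin_ext_sum lin_ext_smult)
  also have "\<dots> = (\<Sum>j\<in>{1..<?n}. \<Sum>i\<in>{1..<?n - 1}. smult ((-1) ^ j * (-1) ^ i) (G i j))"
    by (simp add: D_face assms G_def smult_sum smult_uminus_right sum_negf)
  also have "\<dots> = (\<Sum>j\<in>{1..<?n}. \<Sum>i\<in>{1..<?n - 1}. if even (i + j) then G i j else - G i j)"
    by (simp only: smult_sign)
  also have "\<dots> = (\<Sum>i\<in>{1..<?n - 1}. \<Sum>j\<in>{1..<?n}. if even (i + j) then G i j else - G i j)"
    by (rule sum.swap)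
  also have "\<dots> = (\<Sum>(i,j)\<in>{1..<?n - 1}\<times>{1..<?n}. if even (i + j) then G i j else - G i j)"
    by (simp add: sum.cartesian_product)
  also have "\<dots> = 0"
  proof (rule simplicial_sum)
    fix i j assume ij: "1 \<le> i" "i < j" "j < ?n"
    show "G i j = G (j - 1) i"
    proof (cases "j = i + 1")
      case True
      then show ?thesis using simplicial_adj[OF ij(1) _ assms, of r] ij by (simp add: G_def)
    next
      case False
      then show ?thesis using simplicial_far[OF ij(1) _ ij(3), of r] ij by (simp add: G_def)
    qed
  qed
  finally show ?thesis .
qed

lemma DD:
  assumes "\<And>k. k \<in> ks c \<Longrightarrow> set (snd k) \<subseteq> N"
  shows "D (D c) = 0"
proof -
  have "D (D c) = lin_ext (\<lambda>k. D (dend_d_basis prec succ k)) c"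
    unfolding dend_d_def[of prec succ] lin_ext_comp ..
  also have "\<dots> = lin_ext (\<lambda>k. 0) c"
    by (rule lin_ext_cong) (metis DD_basis assms prod.collapse)
  finally show ?thesis by simp
qed

lemma keys_dbasis: "ks (dend_d_basis prec succ (r, xs)) \<subseteq> (\<Union>i\<in>{1..<length xs}. ks (face i (r, xs)))"
proof -
  have "ks (dend_d_basis prec succ (r, xs)) = ks (\<Sum>i\<in>{1..<length xs}. smult ((-1) ^ i) (face i (r, xs)))"
    by (simp add: dend_d_basis_def)
  also have "\<dots> \<subseteq> (\<Union>i\<in>{1..<length xs}. ks (smult ((-1) ^ i) (face i (r, xs))))" by (rule keys_sum)
  also have "\<dots> \<subseteq> (\<Union>i\<in>{1..<length xs}. ks (face i (r, xs)))"
    by (rule UN_mono) (auto intro: keys_smult[THEN subsetD])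
  finally show ?thesis .
qed

lemma D_C:
  assumes c: "c \<in> dend_C N (Suc n)"
  shows "D c \<in> dend_C N n"
proof -
  have "ks (D c) \<subseteq> {(r, xs). 1 \<le> r \<and> r \<le> n \<and> length xs = n \<and> set xs \<subseteq> N}"
  proof
    fix q assume "q \<in> ks (D c)"
    then obtain k where k: "k \<in> ks c" "q \<in> ks (dend_d_basis prec succ k)"
      using keys_lin_ext[of "dend_d_basis prec succ" c] unfolding dend_d_def by blast
    obtain r xs where kr: "k = (r, xs)" by (cases k)
    have v: "1 \<le> r" "r \<le> Suc n" "length xs = Suc n" "set xs \<subseteq> N"
      using c k(1) kr by (auto simp: dend_C_def fspan_def)
    from k(2) kr keys_dbasis obtain i where i: "i \<in> {1..<length xs}" "q \<in> ks (face i (r, xs))" by blast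
    have "fst q = dend_di_r i r \<and> length (snd q) = length xs - 1 \<and> set (snd q) \<subseteq> N"
      using keys_face[where i=i and xs=xs and r=r and k=q] i v by auto
    then show "q \<in> {(r, xs). 1 \<le> r \<and> r \<le> n \<and> length xs = n \<and> set xs \<subseteq> N}"
      using i v by (cases q) (auto simp: dend_di_r_def)
  qed
  then show ?thesis by (simp add: dend_C_def fspan_def)
qed

lemma DD_C: assumes c: "c \<in> dend_C N n" shows "D (D c) = 0"
proof (rule DD)
  fix k assume "k \<in> ks c"
  then have "k \<in> {(r, xs). 1 \<le> r \<and> r \<le> n \<and> length xs = n \<and> set xs \<subseteq> N}"
    using c by (auto simp: dend_C_def fspan_def)
  then show "set (snd k) \<subseteq> N" by (cases k) auto
qed

end



lemma keys_graft: fixes p :: "'a tree \<Rightarrow>\<^sub>0 'k::comm_ring_1" shows "ks (graft_map f p) \<subseteq> f ` ks p"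
proof -
  have "ks (graft_map f p) \<subseteq> (\<Union>t\<in>ks p. ks (Poly_Mapping.single (f t) (1::'k)))"
    unfolding graft_map_def by (rule keys_lin_ext)
  also have "\<dots> \<subseteq> f ` ks p" by auto
  finally show ?thesis .
qed

lemma keys_star:
  "ks (dtree_star x y :: 'b tree \<Rightarrow>\<^sub>0 'k::comm_ring_1)
     \<subseteq> {t. set_tree t \<subseteq> set_tree x \<union> set_tree y \<and> (t = Leaf \<longrightarrow> x = Leaf \<and> y = Leaf)}"
proof (induction x y rule: dtree_star.induct)
  case (1 y)
  then show ?case by simp
next
  case (2 l a r)
  then show ?case by simp
next
  case (3 l a r l' b r')
  let ?S = "{t. set_tree t \<subseteq> set_tree (Node l a r) \<union> set_tree (Node l' b r') \<and>
      (t = Leaf \<longrightarrow> Node l a r = Leaf \<and> Node l' b r' = Leaf)}"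
  have a: "ks (graft_map (Node l a) (dtree_star r (Node l' b r') :: 'b tree \<Rightarrow>\<^sub>0 'k)) \<subseteq> ?S"
  proof
    fix t assume "t \<in> ks (graft_map (Node l a) (dtree_star r (Node l' b r') :: 'b tree \<Rightarrow>\<^sub>0 'k))"
    then obtain s where "s \<in> ks (dtree_star r (Node l' b r') :: 'b tree \<Rightarrow>\<^sub>0 'k)" "t = Node l a s"
      using keys_graft by blast
    with 3(1) show "t \<in> ?S" by auto
  qed
  have b: "ks (graft_map (\<lambda>t. Node t b r') (dtree_star (Node l a r) l' :: 'b tree \<Rightarrow>\<^sub>0 'k)) \<subseteq> ?S"
  proof
    fix t assume "t \<in> ks (graft_map (\<lambda>t. Node t b r') (dtree_star (Node l a r) l' :: 'b tree \<Rightarrow>\<^sub>0 'k))"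
    then obtain s where "s \<in> ks (dtree_star (Node l a r) l' :: 'b tree \<Rightarrow>\<^sub>0 'k)" "t = Node s b r'"
      using keys_graft by blast
    with 3(2) show "t \<in> ?S" by auto
  qed
  have "ks (dtree_star (Node l a r) (Node l' b r') :: 'b tree \<Rightarrow>\<^sub>0 'k) \<subseteq>
     ks (graft_map (Node l a) (dtree_star r (Node l' b r') :: 'b tree \<Rightarrow>\<^sub>0 'k)) \<union>
     ks (graft_map (\<lambda>t. Node t b r') (dtree_star (Node l a r) l' :: 'b tree \<Rightarrow>\<^sub>0 'k))"
    by (simp only: dtree_star.simps keys_add)
  then show ?case using a b by blast
qed

lemma keys_star_NL: "x \<noteq> Leaf \<or> y \<noteq> Leaf \<Longrightarrow> t \<in> ks (dtree_star x y :: 'b tree \<Rightarrow>\<^sub>0 'k::comm_ring_1) \<Longrightarrow> t \<noteq> Leaf"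
  using keys_star by blast

lemma keys_star_set: "t \<in> ks (dtree_star x y :: 'b tree \<Rightarrow>\<^sub>0 'k::comm_ring_1) \<Longrightarrow> set_tree t \<subseteq> set_tree x \<union> set_tree y"
  using keys_star by blast

lemma keys_prec: "t \<in> ks (dtree_prec x y :: 'b tree \<Rightarrow>\<^sub>0 'k::comm_ring_1) \<Longrightarrow>
   set_tree t \<subseteq> set_tree x \<union> set_tree y \<and> (\<exists>l a r. t = Node l a r \<and> (y \<noteq> Leaf \<longrightarrow> r \<noteq> Leaf))"
proof (cases x)
  case (Node l a r)
  assume t: "t \<in> ks (dtree_prec x y :: 'b tree \<Rightarrow>\<^sub>0 'k)"
  then obtain s where s: "s \<in> ks (dtree_star r y :: 'b tree \<Rightarrow>\<^sub>0 'k)" "t = Node l a s"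
  proof -
    have "t \<in> ks (graft_map (Node l a) (dtree_star r y :: 'b tree \<Rightarrow>\<^sub>0 'k))" using t Node by (simp add: prec_Node)
    then show ?thesis using keys_graft that by blast
  qed
  then show ?thesis using keys_star_set[OF s(1)] keys_star_NL[OF _ s(1)] Node by auto
qed simp

lemma keys_succ: "t \<in> ks (dtree_succ x y :: 'b tree \<Rightarrow>\<^sub>0 'k::comm_ring_1) \<Longrightarrow>
   set_tree t \<subseteq> set_tree x \<union> set_tree y \<and> (\<exists>l a r. t = Node l a r \<and> (x \<noteq> Leaf \<longrightarrow> l \<noteq> Leaf))"
proof (cases y)
  case (Node l a r)
  assume t: "t \<in> ks (dtree_succ x y :: 'b tree \<Rightarrow>\<^sub>0 'k)"
  then obtain s where s: "s \<in> ks (dtree_star x l :: 'b tree \<Rightarrow>\<^sub>0 'k)" "t = Node s a r"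
  proof -
    have "t \<in> ks (graft_map (\<lambda>t. Node t a r) (dtree_star x l :: 'b tree \<Rightarrow>\<^sub>0 'k))" using t Node by (simp add: succ_Node)
    then show ?thesis using keys_graft that by blast
  qed
  then show ?thesis using keys_star_set[OF s(1)] keys_star_NL[OF _ s(1)] Node by auto
qed simp

lemma dendc_trees: "dendc (dtree_prec :: _ \<Rightarrow> _ \<Rightarrow> 'b tree \<Rightarrow>\<^sub>0 'k::comm_ring_1) dtree_succ (dend_basis B)"
proof
  fix x y z :: "'b tree"
  assume x: "x \<in> dend_basis B" and y: "y \<in> dend_basis B"
  show "ks (dtree_prec x y :: 'b tree \<Rightarrow>\<^sub>0 'k) \<subseteq> dend_basis B"
  proof
    fix t assume "t \<in> ks (dtree_prec x y :: 'b tree \<Rightarrow>\<^sub>0 'k)"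
    from keys_prec[OF this] x y show "t \<in> dend_basis B" by (auto simp: dend_basis_def)
  qed
  show "ks (dtree_succ x y :: 'b tree \<Rightarrow>\<^sub>0 'k) \<subseteq> dend_basis B"
  proof
    fix t assume "t \<in> ks (dtree_succ x y :: 'b tree \<Rightarrow>\<^sub>0 'k)"
    from keys_succ[OF this] x y show "t \<in> dend_basis B" by (auto simp: dend_basis_def)
  qed
  assume z: "z \<in> dend_basis B"
  have NL: "x \<noteq> Leaf" "y \<noteq> Leaf" "z \<noteq> Leaf" using x y z by (auto simp: dend_basis_def)
  have m2: "\<And>a b. a \<noteq> Leaf \<or> b \<noteq> Leaf \<Longrightarrow> dtree_prec a b + dtree_succ a b = (dtree_star a b :: 'b tree \<Rightarrow>\<^sub>0 'k)"
    by (simp add: star_split)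
  obtain l a r where xN: "x = Node l a r" using NL by (cases x) auto
  obtain l' b r' where yN: "y = Node l' b r'" using NL by (cases y) auto
  obtain l'' c r'' where zN: "z = Node l'' c r''" using NL by (cases z) auto
  show "lin_ext (\<lambda>w. dtree_prec w z + dtree_succ w z) (dtree_prec x y + dtree_succ x y :: 'b tree \<Rightarrow>\<^sub>0 'k) =
        lin_ext (\<lambda>w. dtree_prec x w + dtree_succ x w) (dtree_prec y z + dtree_succ y z)"
    using NL by (simp add: m2 star_assoc)
  show "lin_ext (\<lambda>w. dtree_prec w z) (dtree_prec x y :: 'b tree \<Rightarrow>\<^sub>0 'k) =
        lin_ext (dtree_prec x) (dtree_prec y z + dtree_succ y z)"
    using NL by (simp add: m2 xN prec_Node S1 S6 star_assoc)
  show "lin_ext (\<lambda>w. dtree_prec w z) (dtree_succ x y :: 'b tree \<Rightarrow>\<^sub>0 'k) = lin_ext (dtree_succ x) (dtree_prec y z)"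
    by (simp add: yN succ_Node prec_Node S2 S4)
  show "lin_ext (\<lambda>w. dtree_succ w z) (dtree_prec x y + dtree_succ x y :: 'b tree \<Rightarrow>\<^sub>0 'k) =
        lin_ext (dtree_succ x) (dtree_succ y z)"
  proof -
    have "lin_ext (\<lambda>w. dtree_succ w z) (dtree_prec x y + dtree_succ x y :: 'b tree \<Rightarrow>\<^sub>0 'k)
       = graft_map (\<lambda>t. Node t c r'') (lin_ext (\<lambda>w. dtree_star w l'') (dtree_star x y :: 'b tree \<Rightarrow>\<^sub>0 'k))"
      using NL by (simp only: m2[of x y, OF disjI1[OF NL(1)]] zN S3)
    also have "\<dots> = graft_map (\<lambda>t. Node t c r'') (lin_ext (dtree_star x) (dtree_star y l'' :: 'b tree \<Rightarrow>\<^sub>0 'k))"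
      by (simp only: star_assoc)
    also have "\<dots> = lin_ext (dtree_succ x) (dtree_succ y z)"
      by (simp only: zN succ_Node S5)
    finally show ?thesis .
  qed
qed



definition rep2 :: "nat \<Rightarrow> 'a list \<Rightarrow> 'a \<Rightarrow> 'a \<Rightarrow> 'a list" where
  "rep2 k xs a b = take k xs @ a # b # drop (k + 1) xs"

lemma length_rep2: "k < length xs \<Longrightarrow> length (rep2 k xs a b) = length xs + 1"
  by (simp add: rep2_def)

lemma nth_rep2: "k < length xs \<Longrightarrow> j < length xs + 1 \<Longrightarrow>
  rep2 k xs a b ! j = (if j < k then xs ! j else if j = k then a else if j = k + 1 then b else xs ! (j - 1))"
proof -
  assume "k < length xs" "j < length xs + 1"
  then show ?thesis
    by (cases "j < k"; cases "j = k"; cases "j = k + 1")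
       (auto simp: rep2_def nth_append min_def nth_Cons' not_less split: nat.split
         intro!: arg_cong[where f="nth xs"])
qed

lemma set_rep2: "set (rep2 k xs a b) \<subseteq> insert a (insert b (set xs))"
  by (auto simp: rep2_def dest: in_set_takeD in_set_dropD)

lemma G1: "k < length xs \<Longrightarrow> ins (k + 1) (rep2 k xs a b) c = xs[k := c]"
  by (rule nth_equalityI) (auto simp: length_ins length_rep2 nth_ins nth_rep2 nth_list_update)

lemma G2: "1 \<le> i \<Longrightarrow> i < k \<Longrightarrow> k < length xs \<Longrightarrow> ins i (rep2 k xs a b) t = rep2 (k - 1) (ins i xs t) a b"
  by (rule nth_equalityI) (auto simp: length_ins length_rep2 nth_ins nth_rep2)

lemma G3: "1 \<le> k \<Longrightarrow> k < length xs \<Longrightarrow> ins k (rep2 k xs a b) g = rep2 (k - 1) (ins k xs c) g b"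
  by (rule nth_equalityI) (auto simp: length_ins length_rep2 nth_ins nth_rep2)

lemma G4: "k + 1 < length xs \<Longrightarrow> ins (k + 2) (rep2 k xs a b) t = rep2 k (ins (k + 1) xs c) a t"
  by (rule nth_equalityI) (auto simp: length_ins length_rep2 nth_ins nth_rep2)

lemma G5: "k + 1 < i \<Longrightarrow> i < length xs \<Longrightarrow> ins (i + 1) (rep2 k xs a b) t = rep2 k (ins i xs t) a b"
  by (rule nth_equalityI) (auto simp: length_ins length_rep2 nth_ins nth_rep2)


definition hb :: "nat \<times> 'b tree list \<Rightarrow> (nat \<times> 'b tree list \<Rightarrow>\<^sub>0 'k::comm_ring_1)" where
  "hb x = (case x of (r, xs) \<Rightarrow> (case xs ! (r - 1) of Leaf \<Rightarrow> 0 | Node \<alpha> v \<beta> \<Rightarrow>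
     if \<alpha> \<noteq> Leaf then Poly_Mapping.single (r + 1, rep2 (r - 1) xs \<alpha> (Node Leaf v \<beta>)) ((-1) ^ (r + 1))
     else if r = 1 \<and> \<beta> \<noteq> Leaf then Poly_Mapping.single (1, rep2 0 xs (Node Leaf v Leaf) \<beta>) 1 else 0))"

lemma hb_A: "zs ! (r - 1) = Node \<alpha> v \<beta> \<Longrightarrow> \<alpha> \<noteq> Leaf \<Longrightarrow>
  hb (r, zs) = Poly_Mapping.single (r + 1, rep2 (r - 1) zs \<alpha> (Node Leaf v \<beta>)) ((-1) ^ (r + 1))"
  by (simp add: hb_def)

lemma hb_B: "zs ! 0 = Node Leaf v \<beta> \<Longrightarrow> \<beta> \<noteq> Leaf \<Longrightarrow>
  hb (1, zs) = Poly_Mapping.single (1, rep2 0 zs (Node Leaf v Leaf) \<beta>) 1"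
  by (simp add: hb_def)

lemma hb_C: "zs ! (r - 1) = Node Leaf v \<beta> \<Longrightarrow> r \<noteq> 1 \<or> \<beta> = Leaf \<Longrightarrow> hb (r, zs) = 0"
  by (auto simp: hb_def)

lemma lin_face: "lin_ext g (dend_face p s j (r, xs)) =
  lin_ext (\<lambda>t. g (dend_di_r j r, ins j xs t)) (dend_circ p s j r (xs ! (j - 1)) (xs ! j))"
  unfolding face_eq lin_ext_comp by simp

lemma smult_lin_single: "smult c (lin_ext (\<lambda>t. Poly_Mapping.single (f t) 1) p) = lin_ext (\<lambda>t. Poly_Mapping.single (f t) c) p"
  by (simp add: lin_ext_fun_smult[symmetric] smult_single)

lemma circ_eq_m2: "i + 1 \<noteq> r \<Longrightarrow> i \<noteq> r \<Longrightarrow> dend_circ p s i r a b = p a b + s a b"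
  by (simp add: dend_circ_def)
lemma circ_eq_succ: "i + 1 = r \<Longrightarrow> dend_circ p s i r a b = s a b"
  by (simp add: dend_circ_def)
lemma circ_eq_prec: "i = r \<Longrightarrow> dend_circ p s i r a b = p a b"
  by (simp add: dend_circ_def)

lemma succ_leaf_right: "dtree_succ a (Node Leaf v \<beta>) = Poly_Mapping.single (Node a v \<beta>) 1"
  by (simp add: succ_Node)
lemma prec_leaf_left: "dtree_prec (Node \<alpha> v Leaf) b = Poly_Mapping.single (Node \<alpha> v b) 1"
  by (simp add: prec_Node)

abbreviation "TF \<equiv> dend_face dtree_prec dtree_succ"
abbreviation "TC \<equiv> dend_circ dtree_prec dtree_succ"

context
  fixes xs :: "'b tree list" and r n :: nat and \<alpha> \<beta> :: "'b tree" and v :: 'b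
  assumes len: "length xs = n" and r1: "1 \<le> r" and rn: "r \<le> n" and NL: "Leaf \<notin> set xs"
    and mid: "xs ! (r - 1) = Node \<alpha> v \<beta>" and aNL: "\<alpha> \<noteq> Leaf"
begin

lemma nth_ys: "j < n + 1 \<Longrightarrow> rep2 (r - 1) xs \<alpha> (Node Leaf v \<beta>) ! j =
  (if j < r - 1 then xs ! j else if j = r - 1 then \<alpha> else if j = r then Node Leaf v \<beta> else xs ! (j - 1))"
  using nth_rep2[of "r - 1" xs j \<alpha> "Node Leaf v \<beta>"] len r1 rn by auto

lemma A1: "TF r (r + 1, rep2 (r - 1) xs \<alpha> (Node Leaf v \<beta>)) = (Poly_Mapping.single (r, xs) 1 :: _ \<Rightarrow>\<^sub>0 'k::comm_ring_1)"
proof -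
  have c: "TC r (r + 1) \<alpha> (Node Leaf v \<beta>) = (Poly_Mapping.single (Node \<alpha> v \<beta>) 1 :: _ \<Rightarrow>\<^sub>0 'k)"
    by (simp add: circ_eq_succ succ_leaf_right)
  have l: "ins r (rep2 (r - 1) xs \<alpha> (Node Leaf v \<beta>)) (Node \<alpha> v \<beta>) = xs"
  proof -
    have "xs[r - 1 := Node \<alpha> v \<beta>] = xs" using mid list_update_id by metis
    then show ?thesis using G1[of "r - 1" xs \<alpha> "Node Leaf v \<beta>" "Node \<alpha> v \<beta>"] len r1 rn by simp
  qed
  have n: "rep2 (r - 1) xs \<alpha> (Node Leaf v \<beta>) ! (r - 1) = \<alpha>" "rep2 (r - 1) xs \<alpha> (Node Leaf v \<beta>) ! r = Node Leaf v \<beta>"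
    using nth_ys r1 rn by auto
  show ?thesis
    by (simp add: face_eq n n[simplified] c c[simplified] l l[simplified] dend_di_r_def)
qed

lemma A2a: assumes i: "1 \<le> i" "i + 1 < r"
  shows "lin_ext hb (TF i (r, xs)) = smult ((-1) ^ r) (TF i (r + 1, rep2 (r - 1) xs \<alpha> (Node Leaf v \<beta>)) :: _ \<Rightarrow>\<^sub>0 'k::comm_ring_1)"
proof -
  have di: "dend_di_r i r = r - 1" "dend_di_r i (r + 1) = r" using i by (auto simp: dend_di_r_def)
  have hbv: "hb (r - 1, ins i xs t) = (Poly_Mapping.single (r, rep2 (r - 2) (ins i xs t) \<alpha> (Node Leaf v \<beta>)) ((-1) ^ r) :: _ \<Rightarrow>\<^sub>0 'k)" for t
  proof -
    have "ins i xs t ! (r - 1 - 1) = xs ! (r - 1)"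
    proof -
      have "Suc (r - 2) = r - 1" "r - 1 - 1 = r - 2" "r - 2 < length xs - 1" "\<not> r - 2 < i - 1" "r - 2 \<noteq> i - 1"
        using i len rn by auto
      then show ?thesis using nth_ins[of i xs "r - 2" t] i len rn by auto
    qed
    then have "hb (r - 1, ins i xs t) = (Poly_Mapping.single (r - 1 + 1, rep2 (r - 1 - 1) (ins i xs t) \<alpha> (Node Leaf v \<beta>)) ((-1) ^ (r - 1 + 1)) :: _ \<Rightarrow>\<^sub>0 'k)"
      using hb_A[of "ins i xs t" "r - 1" \<alpha> v \<beta>] mid aNL by simp
    moreover have "r - 1 + 1 = r" "r - 1 - 1 = r - 2" using i by auto
    ultimately show ?thesis by simp
  qed
  have n: "rep2 (r - 1) xs \<alpha> (Node Leaf v \<beta>) ! (i - 1) = xs ! (i - 1)" "rep2 (r - 1) xs \<alpha> (Node Leaf v \<beta>) ! i = xs ! i"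
    using nth_ys i rn by auto
  have c: "TC i (r + 1) a b = TC i r a b" for a b :: "'b tree"
    using i by (simp add: circ_eq_m2)
  have l: "ins i (rep2 (r - 1) xs \<alpha> (Node Leaf v \<beta>)) t = rep2 (r - 2) (ins i xs t) \<alpha> (Node Leaf v \<beta>)" for t
    using G2[of i "r - 1" xs] i len rn by (simp add: numeral_2_eq_2)
  show ?thesis
    apply (subst lin_face)
    apply (simp add: di di[simplified] hbv hbv[simplified] face_eq n n[simplified] c c[simplified] l l[simplified] smult_lin_single)
    done
qed

lemma A2b: assumes r2: "2 \<le> r"
  shows "lin_ext hb (TF (r - 1) (r, xs)) = smult ((-1) ^ r) (TF (r - 1) (r + 1, rep2 (r - 1) xs \<alpha> (Node Leaf v \<beta>)) :: _ \<Rightarrow>\<^sub>0 'k::comm_ring_1)"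
proof -
  obtain m where m: "r = Suc (Suc m)" using r2 by (cases r; cases "r - 1") auto
  let ?a = "xs ! m"
  have "m < length xs" using len rn m by simp
  then have aNL': "?a \<noteq> Leaf" using NL nth_mem by force
  have mid': "xs ! Suc m = Node \<alpha> v \<beta>" using mid m by simp
  have "lin_ext hb (TF (r - 1) (r, xs)) = lin_ext (\<lambda>t. hb (Suc m, ins (Suc m) xs t)) (dtree_succ ?a (Node \<alpha> v \<beta>))"
    by (simp add: lin_face m dend_di_r_def circ_eq_succ mid')
  also have "\<dots> = lin_ext (\<lambda>g. hb (Suc m, ins (Suc m) xs (Node g v \<beta>))) (dtree_star ?a \<alpha>)"
    by (simp add: succ_Node graft_lin_ext)
  also have "\<dots> = lin_ext (\<lambda>g. Poly_Mapping.single (r, rep2 m (ins (Suc m) xs (Node \<beta> v \<beta>)) g (Node Leaf v \<beta>)) ((-1) ^ r)) (dtree_star ?a \<alpha>)"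
  proof -
    have hv: "hb (Suc m, ins (Suc m) xs (Node g v \<beta>)) =
       (Poly_Mapping.single (r, rep2 m (ins (Suc m) xs (Node \<beta> v \<beta>)) g (Node Leaf v \<beta>)) ((-1) ^ r))"
      if g: "g \<in> ks (dtree_star ?a \<alpha>)" for g
    proof -
    have gNL: "g \<noteq> Leaf" using g keys_star_NL aNL' by blast
    have "ins (Suc m) xs (Node g v \<beta>) ! m = Node g v \<beta>" using nth_ins[of "Suc m" xs m] len rn m by simp
    then have "hb (Suc m, ins (Suc m) xs (Node g v \<beta>)) =
       (Poly_Mapping.single (Suc (Suc m), rep2 m (ins (Suc m) xs (Node g v \<beta>)) g (Node Leaf v \<beta>)) ((-1) ^ Suc (Suc m)))"
      using hb_A[of "ins (Suc m) xs (Node g v \<beta>)" "Suc m" g v \<beta>] gNL by simp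
    also have "rep2 m (ins (Suc m) xs (Node g v \<beta>)) g (Node Leaf v \<beta>) = rep2 m (ins (Suc m) xs (Node \<beta> v \<beta>)) g (Node Leaf v \<beta>)"
      using len rn m by (simp add: ins_def rep2_def min_def)
    finally show ?thesis using m by simp
    qed
    show ?thesis by (rule lin_ext_cong) (rule hv)
  qed
  also have "\<dots> = smult ((-1) ^ r) (TF (r - 1) (r + 1, rep2 (r - 1) xs \<alpha> (Node Leaf v \<beta>)))"
  proof -
    have n: "rep2 (Suc m) xs \<alpha> (Node Leaf v \<beta>) ! m = ?a" "rep2 (Suc m) xs \<alpha> (Node Leaf v \<beta>) ! Suc m = \<alpha>"
      using nth_ys[of m] nth_ys[of "Suc m"] m rn by auto
    have l: "ins (Suc m) (rep2 (Suc m) xs \<alpha> (Node Leaf v \<beta>)) g = rep2 m (ins (Suc m) xs (Node \<beta> v \<beta>)) g (Node Leaf v \<beta>)" for g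
      using G3[of "Suc m" xs \<alpha> "Node Leaf v \<beta>" g "Node \<beta> v \<beta>"] len rn m by simp
    show ?thesis
      using aNL' by (simp add: face_eq m n l dend_di_r_def circ_eq_m2 star_split[symmetric] smult_lin_single)
  qed
  finally show ?thesis .
qed

lemma A3a: assumes rn': "r < n"
  shows "lin_ext hb (TF r (r, xs)) = smult ((-1) ^ (r + 1)) (TF (r + 1) (r + 1, rep2 (r - 1) xs \<alpha> (Node Leaf v \<beta>)) :: _ \<Rightarrow>\<^sub>0 'k::comm_ring_1)"
proof -
  obtain k where k: "r = Suc k" using r1 by (cases r) auto
  let ?b = "xs ! Suc k"
  have mid': "xs ! k = Node \<alpha> v \<beta>" using mid k by simp
  have "lin_ext hb (TF r (r, xs)) = lin_ext (\<lambda>t. hb (Suc k, ins (Suc k) xs t)) (dtree_prec (Node \<alpha> v \<beta>) ?b)"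
    by (simp add: lin_face k dend_di_r_def circ_eq_prec mid')
  also have "\<dots> = lin_ext (\<lambda>g. hb (Suc k, ins (Suc k) xs (Node \<alpha> v g))) (dtree_star \<beta> ?b)"
    by (simp add: prec_Node graft_lin_ext)
  also have "\<dots> = lin_ext (\<lambda>g. Poly_Mapping.single (Suc (Suc k), rep2 k (ins (Suc k) xs (Node \<alpha> v g)) \<alpha> (Node Leaf v g)) ((-1) ^ (r + 1))) (dtree_star \<beta> ?b)"
  proof -
    have hv: "hb (Suc k, ins (Suc k) xs (Node \<alpha> v g)) =
       (Poly_Mapping.single (Suc (Suc k), rep2 k (ins (Suc k) xs (Node \<alpha> v g)) \<alpha> (Node Leaf v g)) ((-1) ^ (r + 1)))" for g
    proof -
      have "ins (Suc k) xs (Node \<alpha> v g) ! k = Node \<alpha> v g" using nth_ins[of "Suc k" xs k] len rn' k by simp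
      then show ?thesis using hb_A[of "ins (Suc k) xs (Node \<alpha> v g)" "Suc k" \<alpha> v g] aNL k by simp
    qed
    show ?thesis by (rule lin_ext_cong) (rule hv)
  qed
  also have "\<dots> = smult ((-1) ^ (r + 1)) (TF (r + 1) (r + 1, rep2 (r - 1) xs \<alpha> (Node Leaf v \<beta>)))"
  proof -
    have n: "rep2 k xs \<alpha> (Node Leaf v \<beta>) ! Suc k = Node Leaf v \<beta>" "rep2 k xs \<alpha> (Node Leaf v \<beta>) ! Suc (Suc k) = ?b"
      using nth_ys[of "Suc k"] nth_ys[of "Suc (Suc k)"] k rn' by auto
    have l: "ins (Suc (Suc k)) (rep2 k xs \<alpha> (Node Leaf v \<beta>)) (Node Leaf v g) = rep2 k (ins (Suc k) xs (Node \<alpha> v g)) \<alpha> (Node Leaf v g)" for g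
      using G4[of k xs \<alpha> "Node Leaf v \<beta>" "Node Leaf v g" "Node \<alpha> v g"] len rn' k by simp
    show ?thesis
      by (simp add: face_eq k n l dend_di_r_def circ_eq_prec prec_Node graft_lin_ext smult_lin_single)
  qed
  finally show ?thesis .
qed

lemma A3b: assumes i: "r < i" "i < n"
  shows "lin_ext hb (TF i (r, xs)) = smult ((-1) ^ (r + 1)) (TF (i + 1) (r + 1, rep2 (r - 1) xs \<alpha> (Node Leaf v \<beta>)) :: _ \<Rightarrow>\<^sub>0 'k::comm_ring_1)"
proof -
  obtain k where k: "r = Suc k" using r1 by (cases r) auto
  obtain j where j: "i = Suc j" using i by (cases i) auto
  have mid': "xs ! k = Node \<alpha> v \<beta>" using mid k by simp
  have "lin_ext hb (TF i (r, xs)) = lin_ext (\<lambda>t. hb (Suc k, ins (Suc j) xs t)) (TC (Suc j) (Suc k) (xs ! j) (xs ! Suc j))"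
    using i by (simp add: lin_face k j dend_di_r_def)
  also have "\<dots> = lin_ext (\<lambda>t. Poly_Mapping.single (Suc (Suc k), rep2 k (ins (Suc j) xs t) \<alpha> (Node Leaf v \<beta>)) ((-1) ^ (r + 1))) (TC (Suc j) (Suc k) (xs ! j) (xs ! Suc j))"
  proof -
    have hv: "hb (Suc k, ins (Suc j) xs t) =
       (Poly_Mapping.single (Suc (Suc k), rep2 k (ins (Suc j) xs t) \<alpha> (Node Leaf v \<beta>)) ((-1) ^ (r + 1)))" for t
    proof -
      have "ins (Suc j) xs t ! k = Node \<alpha> v \<beta>" using nth_ins[of "Suc j" xs k] len i k j mid' by simp
      then show ?thesis using hb_A[of "ins (Suc j) xs t" "Suc k" \<alpha> v \<beta>] aNL k by simp
    qed
    show ?thesis by (rule lin_ext_cong) (rule hv)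
  qed
  also have "\<dots> = smult ((-1) ^ (r + 1)) (TF (i + 1) (r + 1, rep2 (r - 1) xs \<alpha> (Node Leaf v \<beta>)))"
  proof -
    have n: "rep2 k xs \<alpha> (Node Leaf v \<beta>) ! Suc j = xs ! j" "rep2 k xs \<alpha> (Node Leaf v \<beta>) ! Suc (Suc j) = xs ! Suc j"
      using nth_ys[of "Suc j"] nth_ys[of "Suc (Suc j)"] k j i by auto
    have l: "ins (Suc (Suc j)) (rep2 k xs \<alpha> (Node Leaf v \<beta>)) t = rep2 k (ins (Suc j) xs t) \<alpha> (Node Leaf v \<beta>)" for t
      using G5[of k "Suc j" xs \<alpha> "Node Leaf v \<beta>" t] len i k j by simp
    have c: "TC (Suc (Suc j)) (Suc (Suc k)) a b = TC (Suc j) (Suc k) a b" for a b :: "'b tree"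
      using i k j by (simp add: circ_eq_m2)
    show ?thesis
      using i by (simp add: face_eq k j n l c dend_di_r_def smult_lin_single)
  qed
  finally show ?thesis .
qed

end



lemma G6: "1 \<le> k \<Longrightarrow> k < length xs \<Longrightarrow> rep2 (k - 1) (ins k xs c) (xs ! (k - 1)) (xs ! k) = xs"
  by (rule nth_equalityI) (auto simp: length_ins length_rep2 nth_ins nth_rep2)

context
  fixes xs :: "'b tree list" and n :: nat and \<beta> :: "'b tree" and v :: 'b
  assumes len: "length xs = n" and n1: "1 \<le> n" and NL: "Leaf \<notin> set xs"
    and mid: "xs ! 0 = Node Leaf v \<beta>" and bNL: "\<beta> \<noteq> Leaf"
begin

lemma nth_ysB: "j < n + 1 \<Longrightarrow> rep2 0 xs (Node Leaf v Leaf) \<beta> ! j =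
  (if j = 0 then Node Leaf v Leaf else if j = 1 then \<beta> else xs ! (j - 1))"
  using nth_rep2[of 0 xs j "Node Leaf v Leaf" \<beta>] len n1 by auto

lemma B1: "TF 1 (1, rep2 0 xs (Node Leaf v Leaf) \<beta>) = (Poly_Mapping.single (1, xs) 1 :: _ \<Rightarrow>\<^sub>0 'k::comm_ring_1)"
proof -
  have l: "ins 1 (rep2 0 xs (Node Leaf v Leaf) \<beta>) (Node Leaf v \<beta>) = xs"
  proof -
    have "xs[0 := Node Leaf v \<beta>] = xs" using mid list_update_id by metis
    then show ?thesis using G1[of 0 xs "Node Leaf v Leaf" \<beta> "Node Leaf v \<beta>"] len n1 by simp
  qed
  have n: "rep2 0 xs (Node Leaf v Leaf) \<beta> ! 0 = Node Leaf v Leaf" "rep2 0 xs (Node Leaf v Leaf) \<beta> ! 1 = \<beta>"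
    using nth_ysB n1 by auto
  show ?thesis
    by (simp add: face_eq n n[simplified] circ_eq_prec prec_leaf_left l l[simplified] dend_di_r_def)
qed

lemma B3a: assumes n2: "1 < n"
  shows "lin_ext hb (TF 1 (1, xs)) = smult ((-1) ^ (1 + 1)) (TF (1 + 1) (1, rep2 0 xs (Node Leaf v Leaf) \<beta>) :: _ \<Rightarrow>\<^sub>0 'k::comm_ring_1)"
proof -
  let ?b = "xs ! 1"
  have "lin_ext hb (TF 1 (1, xs)) = lin_ext (\<lambda>t. hb (1, ins 1 xs t)) (dtree_prec (Node Leaf v \<beta>) ?b)"
    by (simp add: lin_face dend_di_r_def circ_eq_prec mid)
  also have "\<dots> = lin_ext (\<lambda>g. hb (1, ins 1 xs (Node Leaf v g))) (dtree_star \<beta> ?b)"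
    by (simp add: prec_Node graft_lin_ext)
  also have "\<dots> = lin_ext (\<lambda>g. Poly_Mapping.single (1, rep2 0 (ins 1 xs (Node Leaf v g)) (Node Leaf v Leaf) g) 1) (dtree_star \<beta> ?b)"
  proof -
    have hv: "hb (1, ins 1 xs (Node Leaf v g)) =
       Poly_Mapping.single (1, rep2 0 (ins 1 xs (Node Leaf v g)) (Node Leaf v Leaf) g) 1"
      if g: "g \<in> ks (dtree_star \<beta> ?b)" for g
    proof -
      have gNL: "g \<noteq> Leaf" using g keys_star_NL bNL by blast
      have "ins 1 xs (Node Leaf v g) ! 0 = Node Leaf v g" using nth_ins[of 1 xs 0] len n2 by simp
      then show ?thesis using hb_B[of "ins 1 xs (Node Leaf v g)" v g] gNL by simp
    qed
    show ?thesis by (rule lin_ext_cong) (rule hv)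
  qed
  also have "\<dots> = smult ((-1) ^ (1 + 1)) (TF (1 + 1) (1, rep2 0 xs (Node Leaf v Leaf) \<beta>))"
  proof -
    have n: "rep2 0 xs (Node Leaf v Leaf) \<beta> ! 1 = \<beta>" "rep2 0 xs (Node Leaf v Leaf) \<beta> ! Suc (Suc 0) = ?b"
      using nth_ysB[of 1] nth_ysB[of "Suc (Suc 0)"] n2 by auto
    have l: "ins (Suc (Suc 0)) (rep2 0 xs (Node Leaf v Leaf) \<beta>) g = rep2 0 (ins 1 xs (Node Leaf v g)) (Node Leaf v Leaf) g" for g
      using G4[of 0 xs "Node Leaf v Leaf" \<beta> g "Node Leaf v g"] len n2 by simp
    have m: "TC (Suc (Suc 0)) (Suc 0) \<beta> ?b = dtree_star \<beta> ?b"
      using bNL by (simp add: circ_eq_m2 star_split)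
    show ?thesis
      by (simp add: face_eq n n[simplified] l m m[simplified] dend_di_r_def)
  qed
  finally show ?thesis .
qed

lemma B3b: assumes i: "1 < i" "i < n"
  shows "lin_ext hb (TF i (1, xs)) = smult ((-1) ^ (1 + 1)) (TF (i + 1) (1, rep2 0 xs (Node Leaf v Leaf) \<beta>) :: _ \<Rightarrow>\<^sub>0 'k::comm_ring_1)"
proof -
  obtain j where j: "i = Suc j" using i by (cases i) auto
  have "lin_ext hb (TF i (1, xs)) = lin_ext (\<lambda>t. hb (1, ins (Suc j) xs t)) (TC (Suc j) 1 (xs ! j) (xs ! Suc j))"
    using i by (simp add: lin_face j dend_di_r_def)
  also have "\<dots> = lin_ext (\<lambda>t. Poly_Mapping.single (1, rep2 0 (ins (Suc j) xs t) (Node Leaf v Leaf) \<beta>) 1) (TC (Suc j) 1 (xs ! j) (xs ! Suc j))"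
  proof -
    have hv: "hb (1, ins (Suc j) xs t) = Poly_Mapping.single (1, rep2 0 (ins (Suc j) xs t) (Node Leaf v Leaf) \<beta>) 1" for t
    proof -
      have "ins (Suc j) xs t ! 0 = Node Leaf v \<beta>" using nth_ins[of "Suc j" xs 0] len i j mid by simp
      then show ?thesis using hb_B[of "ins (Suc j) xs t" v \<beta>] bNL by simp
    qed
    show ?thesis by (rule lin_ext_cong) (rule hv)
  qed
  also have "\<dots> = smult ((-1) ^ (1 + 1)) (TF (i + 1) (1, rep2 0 xs (Node Leaf v Leaf) \<beta>))"
  proof -
    have n: "rep2 0 xs (Node Leaf v Leaf) \<beta> ! Suc j = xs ! j" "rep2 0 xs (Node Leaf v Leaf) \<beta> ! Suc (Suc j) = xs ! Suc j"
      using nth_ysB[of "Suc j"] nth_ysB[of "Suc (Suc j)"] j i by auto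
    have l: "ins (Suc (Suc j)) (rep2 0 xs (Node Leaf v Leaf) \<beta>) t = rep2 0 (ins (Suc j) xs t) (Node Leaf v Leaf) \<beta>" for t
      using G5[of 0 "Suc j" xs "Node Leaf v Leaf" \<beta> t] len i j by simp
    have c: "TC (Suc (Suc j)) 1 a b = TC (Suc j) 1 a b" for a b :: "'b tree"
      using i j by (simp add: circ_eq_m2)
    show ?thesis
      using i by (simp add: face_eq j n l c c[simplified] dend_di_r_def)
  qed
  finally show ?thesis .
qed

end



lemma smult_pair: "smult a f + smult b f = smult (a + b) f"
  by (simp add: smult_add_left)

lemma combine:
  fixes Fy Hx :: "nat \<Rightarrow> ('a \<Rightarrow>\<^sub>0 'k::comm_ring_1)"
  assumes r: "1 \<le> r" "r \<le> n" and X: "Fy r = X"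
    and lo: "\<And>i. 1 \<le> i \<Longrightarrow> i < r \<Longrightarrow> Hx i = smult ((-1) ^ r) (Fy i)"
    and hi: "\<And>i. r \<le> i \<Longrightarrow> i < n \<Longrightarrow> Hx i = smult ((-1) ^ (r + 1)) (Fy (i + 1))"
  shows "smult ((-1) ^ (r + 1)) (\<Sum>j\<in>{1..<n+1}. smult ((-1) ^ (j + 1)) (Fy j))
       + (\<Sum>i\<in>{1..<n}. smult ((-1) ^ (i + 1)) (Hx i)) = X"
proof -
  let ?s = "(-1::'k) ^ (r + 1)"
  have s1: "(\<Sum>j\<in>{1..<n+1}. f j) = (\<Sum>j\<in>{1..<r}. f j) + f r + (\<Sum>j\<in>{r+1..<n+1}. f j)" for f :: "nat \<Rightarrow> 'a \<Rightarrow>\<^sub>0 'k"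
  proof -
    have "(\<Sum>j\<in>{1..<n+1}. f j) = (\<Sum>j\<in>{1..<r}. f j) + (\<Sum>j\<in>{r..<n+1}. f j)"
      using sum.atLeastLessThan_concat[of 1 r "n+1" f] r by simp
    also have "(\<Sum>j\<in>{r..<n+1}. f j) = f r + (\<Sum>j\<in>{r+1..<n+1}. f j)"
      using sum.atLeast_Suc_lessThan[of r "n+1" f] r by simp
    finally show ?thesis by (simp add: add.assoc)
  qed
  have s2: "(\<Sum>i\<in>{1..<n}. g i) = (\<Sum>i\<in>{1..<r}. g i) + (\<Sum>j\<in>{r+1..<n+1}. g (j - 1))" for g :: "nat \<Rightarrow> 'a \<Rightarrow>\<^sub>0 'k"
  proof -
    have "(\<Sum>i\<in>{1..<n}. g i) = (\<Sum>i\<in>{1..<r}. g i) + (\<Sum>i\<in>{r..<n}. g i)"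
      using sum.atLeastLessThan_concat[of 1 r n g] r by simp
    also have "(\<Sum>i\<in>{r..<n}. g i) = (\<Sum>j\<in>{r+1..<n+1}. g (j - 1))"
      using sum.shift_bounds_nat_ivl[of "\<lambda>j. g (j - 1)" r 1 n] by simp
    finally show ?thesis .
  qed
  have P1: "smult ?s (\<Sum>j\<in>{1..<r}. smult ((-1) ^ (j + 1)) (Fy j)) + (\<Sum>i\<in>{1..<r}. smult ((-1) ^ (i + 1)) (Hx i)) = 0"
  proof -
    have "smult ?s (\<Sum>j\<in>{1..<r}. smult ((-1) ^ (j + 1)) (Fy j)) + (\<Sum>i\<in>{1..<r}. smult ((-1) ^ (i + 1)) (Hx i))
        = (\<Sum>j\<in>{1..<r}. smult (?s * (-1) ^ (j + 1) + (-1) ^ (j + 1) * (-1) ^ r) (Fy j))"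
      by (auto simp: smult_sum sum.distrib[symmetric] smult_pair lo intro!: sum.cong)
    also have "\<dots> = 0" by (rule sum.neutral) (simp add: algebra_simps)
    finally show ?thesis .
  qed
  have P2: "smult ?s (smult ((-1) ^ (r + 1)) X) = X"
    by (simp flip: power_add)
  have P3: "smult ?s (\<Sum>j\<in>{r+1..<n+1}. smult ((-1) ^ (j + 1)) (Fy j)) + (\<Sum>j\<in>{r+1..<n+1}. smult ((-1) ^ (j - 1 + 1)) (Hx (j - 1))) = 0"
  proof -
    let ?S = "{r+1..<n+1}"
    have a: "(\<Sum>j\<in>?S. smult ((-1) ^ (j - 1 + 1)) (Hx (j - 1))) = (\<Sum>j\<in>?S. smult ((-1) ^ j * ?s) (Fy j))"
    proof (rule sum.cong)
      fix j assume "j \<in> ?S"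
      then have j: "r \<le> j - 1" "j - 1 < n" "j - 1 + 1 = j" by auto
      show "smult ((-1) ^ (j - 1 + 1)) (Hx (j - 1)) = smult ((-1) ^ j * ?s) (Fy j)"
        using hi[OF j(1,2)] j(3) by simp
    qed simp
    have b: "smult ?s (\<Sum>j\<in>?S. smult ((-1) ^ (j + 1)) (Fy j)) = (\<Sum>j\<in>?S. smult (?s * (-1) ^ (j + 1)) (Fy j))"
      by (simp only: smult_sum smult_smult)
    have "smult ?s (\<Sum>j\<in>?S. smult ((-1) ^ (j + 1)) (Fy j)) + (\<Sum>j\<in>?S. smult ((-1) ^ (j - 1 + 1)) (Hx (j - 1)))
        = (\<Sum>j\<in>?S. smult (?s * (-1) ^ (j + 1) + (-1) ^ j * ?s) (Fy j))"
      unfolding a b by (simp only: sum.distrib[symmetric] smult_pair)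
    also have "\<dots> = 0" by (rule sum.neutral) (simp add: algebra_simps)
    finally show ?thesis .
  qed
  show ?thesis
    apply (subst s1, subst s2)
    using P1 P2 P3 X by (simp add: smult_add_right algebra_simps)
qed



context
  fixes xs :: "'b tree list" and n r :: nat and \<beta> :: "'b tree" and v :: 'b
  assumes len: "length xs = n" and r1: "1 \<le> r" and rn: "r \<le> n" and NL: "Leaf \<notin> set xs"
    and mid: "xs ! (r - 1) = Node Leaf v \<beta>"
begin

lemma C1b: assumes r2: "2 \<le> r"
  shows "lin_ext hb (TF (r - 1) (r, xs)) = (Poly_Mapping.single (r, xs) ((-1) ^ r) :: _ \<Rightarrow>\<^sub>0 'k::comm_ring_1)"
proof -
  obtain m where m: "r = Suc (Suc m)" using r2 by (cases r; cases "r - 1") auto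
  let ?a = "xs ! m"
  have "m < length xs" using len rn m by simp
  then have aNL: "?a \<noteq> Leaf" using NL nth_mem by force
  have mid': "xs ! Suc m = Node Leaf v \<beta>" using mid m by simp
  have "lin_ext hb (TF (r - 1) (r, xs)) = hb (Suc m, ins (Suc m) xs (Node ?a v \<beta>))"
    by (simp add: face_eq m dend_di_r_def circ_eq_succ mid' succ_leaf_right)
  also have "\<dots> = Poly_Mapping.single (Suc (Suc m), rep2 m (ins (Suc m) xs (Node ?a v \<beta>)) ?a (Node Leaf v \<beta>)) ((-1) ^ Suc (Suc m))"
  proof -
    have "ins (Suc m) xs (Node ?a v \<beta>) ! m = Node ?a v \<beta>" using nth_ins[of "Suc m" xs m] len rn m by simp
    then show ?thesis using hb_A[of "ins (Suc m) xs (Node ?a v \<beta>)" "Suc m" ?a v \<beta>] aNL by simp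
  qed
  also have "rep2 m (ins (Suc m) xs (Node ?a v \<beta>)) ?a (Node Leaf v \<beta>) = xs"
    using G6[of "Suc m" xs "Node ?a v \<beta>"] mid' len rn m by simp
  finally show ?thesis using m by simp
qed

lemma C1a: assumes r2: "2 \<le> r" and i: "1 \<le> i" "i < n" "i \<noteq> r - 1"
  shows "lin_ext hb (TF i (r, xs)) = (0 :: _ \<Rightarrow>\<^sub>0 'k::comm_ring_1)"
proof -
  obtain m where m: "r = Suc (Suc m)" using r2 by (cases r; cases "r - 1") auto
  obtain j where j: "i = Suc j" using i by (cases i) auto
  have mid': "xs ! Suc m = Node Leaf v \<beta>" using mid m by simp
  consider "i < r - 1" | "i = r" | "r < i" using i by linarith
  then show ?thesis
  proof cases
    case 1
    have "hb (Suc m, ins i xs t) = (0 :: _ \<Rightarrow>\<^sub>0 'k)" for t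
    proof -
      have "\<not> m < i - 1" "m \<noteq> i - 1" "m < length xs - 1" using len rn m i 1 by auto
      then have "ins i xs t ! m = Node Leaf v \<beta>" using nth_ins[of i xs m] len rn m i 1 mid' by simp
      moreover have "0 < m" using 1 i m by simp
      ultimately show ?thesis using hb_C[of "ins i xs t" "Suc m" v \<beta>] by simp
    qed
    then show ?thesis using 1 by (simp add: lin_face m dend_di_r_def)
  next
    case 2
    have "hb (Suc (Suc m), ins i xs (Node Leaf v g)) = (0 :: _ \<Rightarrow>\<^sub>0 'k)" for g
    proof -
      have "ins i xs (Node Leaf v g) ! Suc m = Node Leaf v g" using nth_ins[of i xs "Suc m"] len i m 2 by simp
      then show ?thesis using hb_C[of "ins i xs (Node Leaf v g)" "Suc (Suc m)" v g] by simp
    qed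
    then show ?thesis using 2
      by (simp add: lin_face m dend_di_r_def circ_eq_prec mid' prec_Node graft_lin_ext)
  next
    case 3
    have "hb (Suc (Suc m), ins i xs t) = (0 :: _ \<Rightarrow>\<^sub>0 'k)" for t
    proof -
      have "Suc m < i - 1" "Suc m < length xs - 1" using len i m 3 by auto
      then have "ins i xs t ! Suc m = Node Leaf v \<beta>" using nth_ins[of i xs "Suc m"] len i m 3 mid' by simp
      then show ?thesis using hb_C[of "ins i xs t" "Suc (Suc m)" v \<beta>] by simp
    qed
    then show ?thesis using 3 by (simp add: lin_face m dend_di_r_def)
  qed
qed

lemma C2a: assumes r1': "r = 1" and bL: "\<beta> = Leaf" and n2: "1 < n"
  shows "lin_ext hb (TF 1 (r, xs)) = (Poly_Mapping.single (r, xs) 1 :: _ \<Rightarrow>\<^sub>0 'k::comm_ring_1)"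
proof -
  let ?b = "xs ! 1"
  have "1 < length xs" using len n2 by simp
  then have bNL: "?b \<noteq> Leaf" using NL nth_mem by force
  have mid': "xs ! 0 = Node Leaf v Leaf" using mid r1' bL by simp
  have "lin_ext hb (TF 1 (r, xs)) = hb (1, ins 1 xs (Node Leaf v ?b))"
    by (simp add: face_eq r1' dend_di_r_def circ_eq_prec mid' prec_leaf_left)
  also have "\<dots> = Poly_Mapping.single (1, rep2 0 (ins 1 xs (Node Leaf v ?b)) (Node Leaf v Leaf) ?b) 1"
  proof -
    have "ins 1 xs (Node Leaf v ?b) ! 0 = Node Leaf v ?b" using nth_ins[of 1 xs 0] len n2 by simp
    then show ?thesis using hb_B[of "ins 1 xs (Node Leaf v ?b)" v ?b] bNL by simp
  qed
  also have "rep2 0 (ins 1 xs (Node Leaf v ?b)) (Node Leaf v Leaf) ?b = xs"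
    using G6[of 1 xs "Node Leaf v ?b"] mid' len n2 by simp
  finally show ?thesis using r1' by simp
qed

lemma C2b: assumes r1': "r = 1" and bL: "\<beta> = Leaf" and i: "1 < i" "i < n"
  shows "lin_ext hb (TF i (r, xs)) = (0 :: _ \<Rightarrow>\<^sub>0 'k::comm_ring_1)"
proof -
  have mid': "xs ! 0 = Node Leaf v Leaf" using mid r1' bL by simp
  have "hb (1, ins i xs t) = (0 :: _ \<Rightarrow>\<^sub>0 'k)" for t
  proof -
    have "ins i xs t ! 0 = Node Leaf v Leaf" using nth_ins[of i xs 0] len i mid' by simp
    then show ?thesis using hb_C[of "ins i xs t" 1 v Leaf] by simp
  qed
  then show ?thesis using i r1' by (simp add: lin_face dend_di_r_def)
qed

end



lemma dbasis_pos: "dend_d_basis p s (r, xs) = (\<Sum>i\<in>{1..<length xs}. smult ((-1) ^ (i + 1)) (dend_face p s i (r, xs)))"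
proof -
  have "dend_d_basis p s (r, xs) = (\<Sum>i\<in>{1..<length xs}. - smult ((-1) ^ i) (dend_face p s i (r, xs)))"
    unfolding dend_d_basis_def by (simp add: sum_negf)
  also have "\<dots> = (\<Sum>i\<in>{1..<length xs}. smult ((-1) ^ (i + 1)) (dend_face p s i (r, xs)))"
    by (rule sum.cong) (simp_all add: smult_uminus_left[symmetric])
  finally show ?thesis .
qed

lemma D_single: "dend_d p s (Poly_Mapping.single y c) = smult c (dend_d_basis p s y)"
  by (simp add: dend_d_def)

lemma sum_one_nz: "finite I \<Longrightarrow> i0 \<in> I \<Longrightarrow> (\<And>i. i \<in> I \<Longrightarrow> i \<noteq> i0 \<Longrightarrow> f i = 0) \<Longrightarrow> sum f I = f i0"
  by (simp add: sum.remove)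

lemma hom_basis:
  assumes len: "length xs = n" and r1: "1 \<le> r" and rn: "r \<le> n" and NL: "Leaf \<notin> set xs"
  shows "dend_d dtree_prec dtree_succ (hb (r, xs)) + lin_ext hb (dend_d_basis dtree_prec dtree_succ (r, xs))
         = (if \<exists>v. xs = [Node Leaf v Leaf] then 0 else Poly_Mapping.single (r, xs) (1::'k::comm_ring_1))"
proof -
  have "xs ! (r - 1) \<in> set xs" using len r1 rn by simp
  then have "xs ! (r - 1) \<noteq> Leaf" using NL by metis
  then obtain \<alpha> v \<beta> where mid: "xs ! (r - 1) = Node \<alpha> v \<beta>" by (cases "xs ! (r - 1)") auto
  have H: "lin_ext hb (dend_d_basis dtree_prec dtree_succ (r, xs))
      = (\<Sum>i\<in>{1..<n}. smult ((-1) ^ (i + 1)) (lin_ext hb (TF i (r, xs))) :: _ \<Rightarrow>\<^sub>0 'k)"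
    by (simp add: dbasis_pos len lin_ext_sum lin_ext_smult)
  consider (A) "\<alpha> \<noteq> Leaf" | (B) "\<alpha> = Leaf" "r = 1" "\<beta> \<noteq> Leaf" | (C) "\<alpha> = Leaf" "r \<noteq> 1 \<or> \<beta> = Leaf" by blast
  then show ?thesis
  proof cases
    case A
    let ?ys = "rep2 (r - 1) xs \<alpha> (Node Leaf v \<beta>)"
    have ly: "length ?ys = n + 1" using length_rep2[of "r - 1" xs] len r1 rn by simp
    have Dh: "dend_d dtree_prec dtree_succ (hb (r, xs)) =
        smult ((-1) ^ (r + 1)) (\<Sum>j\<in>{1..<n+1}. smult ((-1) ^ (j + 1)) (TF j (r + 1, ?ys)) :: _ \<Rightarrow>\<^sub>0 'k)"
      by (simp only: hb_A[OF mid A] D_single dbasis_pos ly)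
    have nsv: "\<not> (\<exists>v. xs = [Node Leaf v Leaf])"
      using mid A r1 rn len by auto
    have "dend_d dtree_prec dtree_succ (hb (r, xs)) + lin_ext hb (dend_d_basis dtree_prec dtree_succ (r, xs))
        = (Poly_Mapping.single (r, xs) 1 :: _ \<Rightarrow>\<^sub>0 'k)"
      unfolding Dh H
    proof (rule combine[where Fy="\<lambda>j. TF j (r + 1, ?ys)" and Hx="\<lambda>i. lin_ext hb (TF i (r, xs))", OF r1 rn])
      show "TF r (r + 1, ?ys) = (Poly_Mapping.single (r, xs) 1 :: _ \<Rightarrow>\<^sub>0 'k)"
        by (rule A1[OF len r1 rn NL mid A])
    next
      fix i assume i: "1 \<le> i" "i < r"
      show "lin_ext hb (TF i (r, xs)) = smult ((-1) ^ r) (TF i (r + 1, ?ys) :: _ \<Rightarrow>\<^sub>0 'k)"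
      proof (cases "i + 1 < r")
        case True
        then show ?thesis using A2a[OF len r1 rn NL mid A i(1) True] by simp
      next
        case False
        then have "i = r - 1" "2 \<le> r" using i by auto
        then show ?thesis using A2b[OF len r1 rn NL mid A] by simp
      qed
    next
      fix i assume i: "r \<le> i" "i < n"
      show "lin_ext hb (TF i (r, xs)) = smult ((-1) ^ (r + 1)) (TF (i + 1) (r + 1, ?ys) :: _ \<Rightarrow>\<^sub>0 'k)"
      proof (cases "i = r")
        case True
        then show ?thesis using A3a[OF len r1 rn NL mid A] i by simp
      next
        case False
        then have "r < i" using i by simp
        then show ?thesis by (rule A3b[OF len r1 rn NL mid A _ i(2)])
      qed
    qed
    then show ?thesis using nsv by simp
  next
    case B
    let ?ys = "rep2 0 xs (Node Leaf v Leaf) \<beta>"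
    have mid0: "xs ! 0 = Node Leaf v \<beta>" using mid B by simp
    have n1: "1 \<le> n" using r1 rn by simp
    have ly: "length ?ys = n + 1" using length_rep2[of 0 xs] len n1 by simp
    have Dh: "dend_d dtree_prec dtree_succ (hb (r, xs)) =
        smult ((-1) ^ (1 + 1)) (\<Sum>j\<in>{1..<n+1}. smult ((-1) ^ (j + 1)) (TF j (1, ?ys)) :: _ \<Rightarrow>\<^sub>0 'k)"
    proof -
      have o: "(-1::'k) ^ (1 + 1) = 1" by simp
      show ?thesis by (simp only: B(2) hb_B[OF mid0 B(3)] D_single dbasis_pos ly o)
    qed
    have nsv: "\<not> (\<exists>v. xs = [Node Leaf v Leaf])"
      using mid0 B by auto
    have "dend_d dtree_prec dtree_succ (hb (r, xs)) + lin_ext hb (dend_d_basis dtree_prec dtree_succ (r, xs))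
        = (Poly_Mapping.single (1, xs) 1 :: _ \<Rightarrow>\<^sub>0 'k)"
      unfolding Dh H unfolding B(2)
    proof (rule combine[where Fy="\<lambda>j. TF j (1, ?ys)" and Hx="\<lambda>i. lin_ext hb (TF i (1, xs))", of 1 n])
      show "TF 1 (1, ?ys) = (Poly_Mapping.single (1, xs) 1 :: _ \<Rightarrow>\<^sub>0 'k)"
        by (rule B1[OF len n1 NL mid0 B(3)])
    next
      fix i :: nat assume i: "1 \<le> i" "i < 1" then show "lin_ext hb (TF i (1, xs)) = smult ((-1) ^ 1) (TF i (1, ?ys) :: _ \<Rightarrow>\<^sub>0 'k)" by simp
    next
      fix i assume i: "1 \<le> i" "i < n"
      show "lin_ext hb (TF i (1, xs)) = smult ((-1) ^ (1 + 1)) (TF (i + 1) (1, ?ys) :: _ \<Rightarrow>\<^sub>0 'k)"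
      proof (cases "i = 1")
        case True
        then show ?thesis using B3a[OF len n1 NL mid0 B(3)] i by simp
      next
        case False
        then have "1 < i" using i by simp
        then show ?thesis by (rule B3b[OF len n1 NL mid0 B(3) _ i(2)])
      qed
    qed (use n1 in simp_all)
    then show ?thesis using nsv B by simp
  next
    case C
    have h0: "hb (r, xs) = 0" using hb_C[of xs r v \<beta>] mid C by simp
    have midC: "xs ! (r - 1) = Node Leaf v \<beta>" using mid C by simp
    have Dh: "dend_d dtree_prec dtree_succ (hb (r, xs)) = (0 :: _ \<Rightarrow>\<^sub>0 'k)" by (simp add: h0 dend_d_def)
    show ?thesis
    proof (cases "2 \<le> r")
      case True
      have nsv: "\<not> (\<exists>v. xs = [Node Leaf v Leaf])" using True rn len by auto
      have "(\<Sum>i\<in>{1..<n}. smult ((-1) ^ (i + 1)) (lin_ext hb (TF i (r, xs))) :: _ \<Rightarrow>\<^sub>0 'k)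
          = smult ((-1) ^ (r - 1 + 1)) (lin_ext hb (TF (r - 1) (r, xs)))"
      proof (rule sum_one_nz)
        show "r - 1 \<in> {1..<n}" using True rn by auto
      next
        fix i assume i: "i \<in> {1..<n}" "i \<noteq> r - 1"
        have "lin_ext hb (TF i (r, xs)) = (0 :: _ \<Rightarrow>\<^sub>0 'k)"
          by (rule C1a[OF len r1 rn NL midC True]) (use i in auto)
        then show "smult ((-1) ^ (i + 1)) (lin_ext hb (TF i (r, xs))) = (0 :: _ \<Rightarrow>\<^sub>0 'k)"
          by simp
      qed simp
      also have "\<dots> = Poly_Mapping.single (r, xs) 1"
      proof -
        have e: "(-1::'k) ^ r * (-1) ^ r = 1" by (simp flip: power_mult_distrib)
        have "r - 1 + 1 = r" using True by simp
        then have "smult ((-1) ^ (r - 1 + 1)) (lin_ext hb (TF (r - 1) (r, xs))) = smult ((-1) ^ r) (Poly_Mapping.single (r, xs) ((-1) ^ r) :: _ \<Rightarrow>\<^sub>0 'k)"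
          by (simp only: C1b[OF len r1 rn NL midC True])
        then show ?thesis using e by (simp add: smult_single)
      qed
      finally show ?thesis using nsv Dh H by simp
    next
      case False
      then have r1': "r = 1" and bL: "\<beta> = Leaf" using r1 C by auto
      show ?thesis
      proof (cases "n = 1")
        case True
        then have "xs = [Node Leaf v Leaf]" using len midC r1' bL
          by (cases xs) auto
        then show ?thesis using Dh H True by simp
      next
        case False
        then have n2: "1 < n" using rn r1' by simp
        have nsv: "\<not> (\<exists>v. xs = [Node Leaf v Leaf])" using n2 len by auto
        have "(\<Sum>i\<in>{1..<n}. smult ((-1) ^ (i + 1)) (lin_ext hb (TF i (r, xs))) :: _ \<Rightarrow>\<^sub>0 'k)
            = smult ((-1) ^ (1 + 1)) (lin_ext hb (TF 1 (r, xs)))"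
        proof (rule sum_one_nz)
          show "1 \<in> {1..<n}" using n2 by auto
        next
          fix i assume i: "i \<in> {1..<n}" "i \<noteq> 1"
          have "lin_ext hb (TF i (r, xs)) = (0 :: _ \<Rightarrow>\<^sub>0 'k)"
            by (rule C2b[OF len r1 rn NL midC r1' bL]) (use i in auto)
          then show "smult ((-1) ^ (i + 1)) (lin_ext hb (TF i (r, xs))) = (0 :: _ \<Rightarrow>\<^sub>0 'k)"
            by simp
        qed simp
        also have "\<dots> = Poly_Mapping.single (r, xs) 1"
          using C2a[OF len r1 rn NL midC r1' bL n2] by simp
        finally show ?thesis using nsv Dh H by simp
      qed
    qed
  qed
qed



definition sv :: "'b tree list \<Rightarrow> bool" where "sv xs \<longleftrightarrow> (\<exists>v. xs = [Node Leaf v Leaf])"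

fun phib :: "'b tree list \<Rightarrow> ('b \<Rightarrow>\<^sub>0 'k::comm_ring_1)" where
  "phib [Node Leaf v Leaf] = Poly_Mapping.single v 1"
| "phib _ = 0"

lemma phib_nsv: "\<not> sv xs \<Longrightarrow> phib xs = 0"
  by (cases xs rule: phib.cases) (auto simp: sv_def)

definition PHI :: "((nat \<times> 'b tree list) \<Rightarrow>\<^sub>0 'k::comm_ring_1) \<Rightarrow> ('b \<Rightarrow>\<^sub>0 'k)" where
  "PHI c = lin_ext (\<lambda>k. phib (snd k)) c"

lemma C_keys: "c \<in> dend_C Bas n \<Longrightarrow> k \<in> ks c \<Longrightarrow>
  1 \<le> fst k \<and> fst k \<le> n \<and> length (snd k) = n \<and> set (snd k) \<subseteq> Bas"
  by (cases k) (auto simp: dend_C_def fspan_def)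

lemma basis_NL: "set xs \<subseteq> dend_basis B \<Longrightarrow> Leaf \<notin> set xs"
  by (auto simp: dend_basis_def)

lemma hom_C:
  assumes c: "c \<in> dend_C (dend_basis B) n"
  shows "dend_d dtree_prec dtree_succ (lin_ext hb c) + lin_ext hb (dend_d dtree_prec dtree_succ c)
       = lin_ext (\<lambda>k. if sv (snd k) then 0 else Poly_Mapping.single k 1) (c :: _ \<Rightarrow>\<^sub>0 'k::comm_ring_1)"
proof -
  have "dend_d dtree_prec dtree_succ (lin_ext hb c) + lin_ext hb (dend_d dtree_prec dtree_succ c)
      = lin_ext (\<lambda>k. dend_d dtree_prec dtree_succ (hb k) + lin_ext hb (dend_d_basis dtree_prec dtree_succ k)) c"
    unfolding lin_ext_fun_add dend_d_def[of dtree_prec dtree_succ] lin_ext_comp ..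
  also have "\<dots> = lin_ext (\<lambda>k. if sv (snd k) then 0 else Poly_Mapping.single k 1) c"
  proof (rule lin_ext_cong)
    fix k assume k: "k \<in> ks c"
    obtain r xs where kr: "k = (r, xs)" by (cases k)
    have v: "1 \<le> r" "r \<le> n" "length xs = n" "set xs \<subseteq> dend_basis B" using C_keys[OF c k] kr by auto
    show "dend_d dtree_prec dtree_succ (hb k) + lin_ext hb (dend_d_basis dtree_prec dtree_succ k)
        = (if sv (snd k) then 0 else Poly_Mapping.single k 1)"
      unfolding kr snd_conv sv_def by (rule hom_basis[OF v(3) v(1) v(2) basis_NL[OF v(4)]])
  qed
  finally show ?thesis .
qed

lemma hb_keys: "xs ! (r - 1) = Node \<alpha> v \<beta> \<Longrightarrow>
  ks (hb (r, xs)) \<subseteq> {(r + 1, rep2 (r - 1) xs \<alpha> (Node Leaf v \<beta>)), (1, rep2 0 xs (Node Leaf v Leaf) \<beta>)}"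
  by (auto simp: hb_def)

lemma H_C:
  fixes c :: "(nat \<times> 'b tree list) \<Rightarrow>\<^sub>0 'k::comm_ring_1"
  assumes c: "c \<in> dend_C (dend_basis B) n"
  shows "lin_ext hb c \<in> dend_C (dend_basis B) (Suc n)"
proof -
  have "ks (lin_ext hb c) \<subseteq> {(r, xs). 1 \<le> r \<and> r \<le> Suc n \<and> length xs = Suc n \<and> set xs \<subseteq> dend_basis B}"
  proof
    fix q assume "q \<in> ks (lin_ext hb c)"
    then have "q \<in> (\<Union>t\<in>ks c. ks (hb t :: _ \<Rightarrow>\<^sub>0 'k))" using keys_lin_ext[of hb c] by (rule subsetD[rotated])
    then obtain k where k: "k \<in> ks c" "q \<in> ks (hb k :: _ \<Rightarrow>\<^sub>0 'k)" by (rule UN_E)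
    obtain r xs where kr: "k = (r, xs)" by (cases k)
    have v: "1 \<le> r" "r \<le> n" "length xs = n" "set xs \<subseteq> dend_basis B" using C_keys[OF c k(1)] kr by auto
    have "xs ! (r - 1) \<in> set xs" using v by simp
    then have m: "xs ! (r - 1) \<in> dend_basis B" using v by blast
    then obtain \<alpha> v' \<beta> where mid: "xs ! (r - 1) = Node \<alpha> v' \<beta>" by (cases "xs ! (r - 1)") (auto simp: dend_basis_def)
    have sets: "set_tree \<alpha> \<subseteq> B" "v' \<in> B" "set_tree \<beta> \<subseteq> B" using m mid by (auto simp: dend_basis_def)
    have "q \<in> ks (hb (r, xs) :: _ \<Rightarrow>\<^sub>0 'k)" using k(2) kr by simp
    then have "q \<in> {(r + 1, rep2 (r - 1) xs \<alpha> (Node Leaf v' \<beta>)), (1, rep2 0 xs (Node Leaf v' Leaf) \<beta>)}"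
      using hb_keys[OF mid] by (rule subsetD[rotated])
    then have q: "q = (r + 1, rep2 (r - 1) xs \<alpha> (Node Leaf v' \<beta>)) \<or> q = (1, rep2 0 xs (Node Leaf v' Leaf) \<beta>)"
      by simp
    show "q \<in> {(r, xs). 1 \<le> r \<and> r \<le> Suc n \<and> length xs = Suc n \<and> set xs \<subseteq> dend_basis B}"
    proof (cases "q = (r + 1, rep2 (r - 1) xs \<alpha> (Node Leaf v' \<beta>))")
      case True
      have aNL: "\<alpha> \<noteq> Leaf"
      proof
        assume "\<alpha> = Leaf"
        then have "(hb (r, xs) :: _ \<Rightarrow>\<^sub>0 'k) = (if r = 1 \<and> \<beta> \<noteq> Leaf then Poly_Mapping.single (1, rep2 0 xs (Node Leaf v' Leaf) \<beta>) 1 else 0)"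
          using mid by (simp add: hb_def)
        then show False using k(2) kr True by (cases "r = 1 \<and> \<beta> \<noteq> Leaf") auto
      qed
      have "\<alpha> \<in> dend_basis B" "Node Leaf v' \<beta> \<in> dend_basis B" using sets aNL by (auto simp: dend_basis_def)
      then have "set (rep2 (r - 1) xs \<alpha> (Node Leaf v' \<beta>)) \<subseteq> dend_basis B"
        using set_rep2[of "r - 1" xs \<alpha> "Node Leaf v' \<beta>"] v by blast
      then show ?thesis using True v length_rep2[of "r - 1" xs] by auto
    next
      case False
      then have qq: "q = (1, rep2 0 xs (Node Leaf v' Leaf) \<beta>)" using q by blast
      have bNL: "\<beta> \<noteq> Leaf"
      proof
        assume "\<beta> = Leaf"
        then have "(hb (r, xs) :: _ \<Rightarrow>\<^sub>0 'k) = (if \<alpha> \<noteq> Leaf then Poly_Mapping.single (r + 1, rep2 (r - 1) xs \<alpha> (Node Leaf v' \<beta>)) ((-1) ^ (r + 1)) else 0)"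
          using mid by (simp add: hb_def)
        then show False using k(2) kr False by (cases "\<alpha> \<noteq> Leaf") (auto split: if_splits)
      qed
      have "\<beta> \<in> dend_basis B" "Node Leaf v' Leaf \<in> dend_basis B" using sets bNL by (auto simp: dend_basis_def)
      then have "set (rep2 0 xs (Node Leaf v' Leaf) \<beta>) \<subseteq> dend_basis B"
        using set_rep2[of 0 xs "Node Leaf v' Leaf" \<beta>] v by blast
      then show ?thesis using qq v length_rep2[of 0 xs] by auto
    qed
  qed
  then show ?thesis by (simp add: dend_C_def fspan_def)
qed

lemma C1_Z: "c \<in> dend_C Bas 1 \<Longrightarrow> dend_d p s c = 0"
proof -
  assume c: "c \<in> dend_C Bas 1"
  have "dend_d p s c = lin_ext (\<lambda>k. 0) c"
    unfolding dend_d_def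
  proof (rule lin_ext_cong)
    fix k assume "k \<in> ks c"
    then have "length (snd k) = 1" using C_keys[OF c] by blast
    then show "dend_d_basis p s k = 0" by (simp add: dend_d_basis_def)
  qed
  then show ?thesis by simp
qed

lemma circ_keys_nsv:
  assumes a: "a \<noteq> Leaf" and b: "b \<noteq> Leaf"
    and t: "t \<in> ks (dend_circ dtree_prec dtree_succ i r a b :: _ \<Rightarrow>\<^sub>0 'k::comm_ring_1)"
  shows "\<not> sv [t]"
proof -
  have "t \<in> ks (dtree_prec a b :: _ \<Rightarrow>\<^sub>0 'k) \<union> ks (dtree_succ a b :: _ \<Rightarrow>\<^sub>0 'k)"
    using t keys_add[of "dtree_prec a b :: _ \<Rightarrow>\<^sub>0 'k" "dtree_succ a b"]
    by (auto simp: dend_circ_def split: if_splits)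
  then show ?thesis
  proof
    assume "t \<in> ks (dtree_prec a b :: _ \<Rightarrow>\<^sub>0 'k)"
    from keys_prec[OF this] b show ?thesis by (auto simp: sv_def)
  next
    assume "t \<in> ks (dtree_succ a b :: _ \<Rightarrow>\<^sub>0 'k)"
    from keys_succ[OF this] a show ?thesis by (auto simp: sv_def)
  qed
qed

lemma PHI_D2:
  fixes y :: "(nat \<times> 'b tree list) \<Rightarrow>\<^sub>0 'k::comm_ring_1"
  assumes y: "y \<in> dend_C (dend_basis B) 2"
  shows "PHI (dend_d dtree_prec dtree_succ y) = 0"
proof -
  have "PHI (dend_d dtree_prec dtree_succ y) = lin_ext (\<lambda>k. PHI (dend_d_basis dtree_prec dtree_succ k :: _ \<Rightarrow>\<^sub>0 'k)) y"
    unfolding PHI_def dend_d_def lin_ext_comp ..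
  also have "\<dots> = lin_ext (\<lambda>k. 0) y"
  proof (rule lin_ext_cong)
    fix k assume k: "k \<in> ks y"
    obtain r xs where kr: "k = (r, xs)" by (cases k)
    have v: "length xs = 2" "set xs \<subseteq> dend_basis B" using C_keys[OF y k] kr by auto
    then obtain a b where xs: "xs = [a, b]"
      by (metis (no_types, lifting) One_nat_def Suc_1 length_0_conv length_Suc_conv)
    have ab: "a \<noteq> Leaf" "b \<noteq> Leaf" using v xs by (auto simp: dend_basis_def)
    have "dend_d_basis dtree_prec dtree_succ (r, xs) = (dend_face dtree_prec dtree_succ 1 (r, xs) :: _ \<Rightarrow>\<^sub>0 'k)"
      using xs by (simp add: dbasis_pos)
    then have "PHI (dend_d_basis dtree_prec dtree_succ k :: _ \<Rightarrow>\<^sub>0 'k)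
        = lin_ext (\<lambda>t. phib [t]) (dend_circ dtree_prec dtree_succ 1 r a b :: _ \<Rightarrow>\<^sub>0 'k)"
      using xs kr by (simp add: PHI_def lin_face ins_def)
    also have "\<dots> = lin_ext (\<lambda>t. 0) (dend_circ dtree_prec dtree_succ 1 r a b :: _ \<Rightarrow>\<^sub>0 'k)"
      by (rule lin_ext_cong) (rule phib_nsv, rule circ_keys_nsv[OF ab])
    finally show "PHI (dend_d_basis dtree_prec dtree_succ k :: _ \<Rightarrow>\<^sub>0 'k) = 0" by simp
  qed
  finally show ?thesis by simp
qed

lemma P_R:
  fixes c :: "(nat \<times> 'b tree list) \<Rightarrow>\<^sub>0 'k::comm_ring_1"
  assumes c: "c \<in> dend_C Bas 1"
  shows "lin_ext (\<lambda>k. if sv (snd k) then Poly_Mapping.single k 1 else 0) c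
       = lin_ext (\<lambda>v. Poly_Mapping.single (1, [Node Leaf v Leaf]) 1) (PHI c)"
proof -
  have "lin_ext (\<lambda>v. Poly_Mapping.single (1, [Node Leaf v Leaf]) 1) (PHI c)
      = lin_ext (\<lambda>k. lin_ext (\<lambda>v. Poly_Mapping.single (1, [Node Leaf v Leaf]) 1) (phib (snd k) :: _ \<Rightarrow>\<^sub>0 'k)) c"
    unfolding PHI_def lin_ext_comp ..
  also have "\<dots> = lin_ext (\<lambda>k. if sv (snd k) then Poly_Mapping.single k 1 else 0) c"
  proof (rule lin_ext_cong)
    fix k assume k: "k \<in> ks c"
    obtain r xs where kr: "k = (r, xs)" by (cases k)
    have r: "r = 1" using C_keys[OF c k] kr by auto
    show "lin_ext (\<lambda>v. Poly_Mapping.single (1, [Node Leaf v Leaf]) 1) (phib (snd k) :: _ \<Rightarrow>\<^sub>0 'k)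
        = (if sv (snd k) then Poly_Mapping.single k 1 else 0)"
    proof (cases "sv xs")
      case True
      then obtain v where "xs = [Node Leaf v Leaf]" by (auto simp: sv_def)
      then show ?thesis using kr r True by simp
    next
      case False
      have "(phib xs :: _ \<Rightarrow>\<^sub>0 'k) = 0" by (rule phib_nsv[OF False])
      then show ?thesis using kr False by simp
    qed
  qed
  finally show ?thesis ..
qed

theorem theorem6p5:
  fixes B :: "'b set"
  shows "(\<exists>\<phi> :: ((nat \<times> 'b tree list) \<Rightarrow>\<^sub>0 'k::field_char_0) \<Rightarrow> ('b \<Rightarrow>\<^sub>0 'k).
            linear_on (dend_Z (dend_basis B) dtree_prec dtree_succ 1) \<phi>
          \<and> \<phi> ` dend_Z (dend_basis B) dtree_prec dtree_succ 1 = fspan B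
          \<and> {c \<in> dend_Z (dend_basis B) dtree_prec dtree_succ 1. \<phi> c = 0}
              = dend_B (dend_basis B) (dtree_prec :: _ \<Rightarrow> _ \<Rightarrow> ('b tree \<Rightarrow>\<^sub>0 'k)) dtree_succ 1)
       \<and> (\<forall>n>1. dend_Z (dend_basis B) (dtree_prec :: _ \<Rightarrow> _ \<Rightarrow> ('b tree \<Rightarrow>\<^sub>0 'k)) dtree_succ n
               = dend_B (dend_basis B) dtree_prec dtree_succ n)"
proof -
  let ?N = "dend_basis B"
  let ?D = "dend_d (dtree_prec :: _ \<Rightarrow> _ \<Rightarrow> ('b tree \<Rightarrow>\<^sub>0 'k)) dtree_succ"
  interpret T: dendc "dtree_prec :: _ \<Rightarrow> _ \<Rightarrow> ('b tree \<Rightarrow>\<^sub>0 'k)" dtree_succ ?N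
    by (rule dendc_trees)
  have Z1: "dend_Z ?N (dtree_prec :: _ \<Rightarrow> _ \<Rightarrow> ('b tree \<Rightarrow>\<^sub>0 'k)) dtree_succ 1 = dend_C ?N 1"
    by (auto simp: dend_Z_def C1_Z)
  have part2: "\<forall>n>1. dend_Z ?N (dtree_prec :: _ \<Rightarrow> _ \<Rightarrow> ('b tree \<Rightarrow>\<^sub>0 'k)) dtree_succ n
               = dend_B ?N dtree_prec dtree_succ n"
  proof (intro allI impI)
    fix n :: nat assume n: "n > 1"
    show "dend_Z ?N (dtree_prec :: _ \<Rightarrow> _ \<Rightarrow> ('b tree \<Rightarrow>\<^sub>0 'k)) dtree_succ n = dend_B ?N dtree_prec dtree_succ n"
    proof
      show "dend_Z ?N (dtree_prec :: _ \<Rightarrow> _ \<Rightarrow> ('b tree \<Rightarrow>\<^sub>0 'k)) dtree_succ n \<subseteq> dend_B ?N dtree_prec dtree_succ n"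
      proof
        fix c :: "(nat \<times> 'b tree list) \<Rightarrow>\<^sub>0 'k"
        assume "c \<in> dend_Z ?N dtree_prec dtree_succ n"
        then have c: "c \<in> dend_C ?N n" and dc: "?D c = 0" by (auto simp: dend_Z_def)
        have "lin_ext (\<lambda>k. if sv (snd k) then 0 else Poly_Mapping.single k 1) c = lin_ext (\<lambda>k. Poly_Mapping.single k 1) c"
        proof (rule lin_ext_cong)
          fix k assume "k \<in> ks c"
          then have "length (snd k) = n" using C_keys[OF c] by blast
          then have "\<not> sv (snd k)" using n by (auto simp: sv_def)
          then show "(if sv (snd k) then 0 else Poly_Mapping.single k 1) = (Poly_Mapping.single k 1 :: _ \<Rightarrow>\<^sub>0 'k)" by simp
        qed
        then have "?D (lin_ext hb c) = c"
          using hom_C[OF c] dc by (simp add: lin_ext_id)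
        moreover have "lin_ext hb c \<in> dend_C ?N (Suc n)" by (rule H_C[OF c])
        ultimately show "c \<in> dend_B ?N dtree_prec dtree_succ n"
          unfolding dend_B_def by (metis image_eqI)
      qed
    next
      show "dend_B ?N dtree_prec dtree_succ n \<subseteq> dend_Z ?N (dtree_prec :: _ \<Rightarrow> _ \<Rightarrow> ('b tree \<Rightarrow>\<^sub>0 'k)) dtree_succ n"
      proof
        fix c :: "(nat \<times> 'b tree list) \<Rightarrow>\<^sub>0 'k"
        assume "c \<in> dend_B ?N dtree_prec dtree_succ n"
        then obtain y where y: "y \<in> dend_C ?N (Suc n)" and cy: "c = ?D y" by (auto simp: dend_B_def)
        have "c \<in> dend_C ?N n" using T.D_C[OF y] cy by simp
        moreover have "?D c = 0" using T.DD_C[OF y] cy by simp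
        ultimately show "c \<in> dend_Z ?N dtree_prec dtree_succ n" by (simp add: dend_Z_def)
      qed
    qed
  qed
  have lin: "linear_on (dend_Z ?N (dtree_prec :: _ \<Rightarrow> _ \<Rightarrow> ('b tree \<Rightarrow>\<^sub>0 'k)) dtree_succ 1) (PHI :: _ \<Rightarrow> ('b \<Rightarrow>\<^sub>0 'k))"
    by (simp add: linear_on_def PHI_def lin_ext_add lin_ext_smult)
  have img: "(PHI :: _ \<Rightarrow> ('b \<Rightarrow>\<^sub>0 'k)) ` dend_Z ?N (dtree_prec :: _ \<Rightarrow> _ \<Rightarrow> ('b tree \<Rightarrow>\<^sub>0 'k)) dtree_succ 1 = fspan B"
  proof
    show "(PHI :: _ \<Rightarrow> ('b \<Rightarrow>\<^sub>0 'k)) ` dend_Z ?N (dtree_prec :: _ \<Rightarrow> _ \<Rightarrow> ('b tree \<Rightarrow>\<^sub>0 'k)) dtree_succ 1 \<subseteq> fspan B"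
    proof
      fix p assume "p \<in> (PHI :: _ \<Rightarrow> ('b \<Rightarrow>\<^sub>0 'k)) ` dend_Z ?N (dtree_prec :: _ \<Rightarrow> _ \<Rightarrow> ('b tree \<Rightarrow>\<^sub>0 'k)) dtree_succ 1"
      then obtain c where c: "c \<in> dend_C ?N 1" and pc: "p = PHI c" using Z1 by auto
      have "ks p \<subseteq> (\<Union>k\<in>ks c. ks (phib (snd k) :: _ \<Rightarrow>\<^sub>0 'k))"
        unfolding pc PHI_def by (rule keys_lin_ext)
      also have "\<dots> \<subseteq> B"
      proof (rule UN_least)
        fix k assume k: "k \<in> ks c"
        have sx: "set (snd k) \<subseteq> ?N" using C_keys[OF c k] by blast
        show "ks (phib (snd k) :: _ \<Rightarrow>\<^sub>0 'k) \<subseteq> B"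
        proof (cases "sv (snd k)")
          case True
          then obtain v where "snd k = [Node Leaf v Leaf]" by (auto simp: sv_def)
          then show ?thesis using sx by (auto simp: dend_basis_def)
        next
          case False
          then show ?thesis by (simp add: phib_nsv)
        qed
      qed
      finally show "p \<in> fspan B" by (simp add: fspan_def)
    qed
  next
    show "fspan B \<subseteq> (PHI :: _ \<Rightarrow> ('b \<Rightarrow>\<^sub>0 'k)) ` dend_Z ?N (dtree_prec :: _ \<Rightarrow> _ \<Rightarrow> ('b tree \<Rightarrow>\<^sub>0 'k)) dtree_succ 1"
    proof
      fix p :: "'b \<Rightarrow>\<^sub>0 'k" assume p: "p \<in> fspan B"
      define c where "c = lin_ext (\<lambda>v. Poly_Mapping.single ((1::nat), [Node Leaf v Leaf]) (1::'k)) p"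
      have "ks c \<subseteq> (\<Union>v\<in>ks p. ks (Poly_Mapping.single ((1::nat), [Node Leaf v Leaf]) (1::'k)))"
        unfolding c_def by (rule keys_lin_ext)
      also have "\<dots> \<subseteq> {(r, xs). 1 \<le> (r::nat) \<and> r \<le> 1 \<and> length xs = 1 \<and> set xs \<subseteq> ?N}"
        using p by (auto simp: fspan_def dend_basis_def)
      finally have cC: "c \<in> dend_C ?N 1" by (simp add: dend_C_def fspan_def)
      have "PHI c = lin_ext (\<lambda>v. PHI (Poly_Mapping.single ((1::nat), [Node Leaf v Leaf]) (1::'k))) p"
        unfolding c_def PHI_def lin_ext_comp ..
      also have "\<dots> = lin_ext (\<lambda>v. Poly_Mapping.single v 1) p"
        by (simp add: PHI_def)
      also have "\<dots> = p" by (rule lin_ext_id)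
      finally show "p \<in> (PHI :: _ \<Rightarrow> ('b \<Rightarrow>\<^sub>0 'k)) ` dend_Z ?N (dtree_prec :: _ \<Rightarrow> _ \<Rightarrow> ('b tree \<Rightarrow>\<^sub>0 'k)) dtree_succ 1"
        using cC Z1 by (metis image_eqI)
    qed
  qed
  have ker: "{c \<in> dend_Z ?N (dtree_prec :: _ \<Rightarrow> _ \<Rightarrow> ('b tree \<Rightarrow>\<^sub>0 'k)) dtree_succ 1. (PHI :: _ \<Rightarrow> ('b \<Rightarrow>\<^sub>0 'k)) c = 0}
      = dend_B ?N (dtree_prec :: _ \<Rightarrow> _ \<Rightarrow> ('b tree \<Rightarrow>\<^sub>0 'k)) dtree_succ 1"
  proof
    show "{c \<in> dend_Z ?N (dtree_prec :: _ \<Rightarrow> _ \<Rightarrow> ('b tree \<Rightarrow>\<^sub>0 'k)) dtree_succ 1. (PHI :: _ \<Rightarrow> ('b \<Rightarrow>\<^sub>0 'k)) c = 0}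
      \<subseteq> dend_B ?N (dtree_prec :: _ \<Rightarrow> _ \<Rightarrow> ('b tree \<Rightarrow>\<^sub>0 'k)) dtree_succ 1"
    proof
      fix c :: "(nat \<times> 'b tree list) \<Rightarrow>\<^sub>0 'k"
      assume "c \<in> {c \<in> dend_Z ?N (dtree_prec :: _ \<Rightarrow> _ \<Rightarrow> ('b tree \<Rightarrow>\<^sub>0 'k)) dtree_succ 1. (PHI :: _ \<Rightarrow> ('b \<Rightarrow>\<^sub>0 'k)) c = 0}"
      then have c: "c \<in> dend_C ?N 1" and pc: "PHI c = (0 :: 'b \<Rightarrow>\<^sub>0 'k)" using Z1 by auto
      have dc: "?D c = 0" by (rule C1_Z[OF c])
      have P0: "lin_ext (\<lambda>k. if sv (snd k) then Poly_Mapping.single k 1 else 0) c = 0"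
        using P_R[OF c] pc by simp
      have "lin_ext (\<lambda>k. if sv (snd k) then 0 else Poly_Mapping.single k 1) c
          + lin_ext (\<lambda>k. if sv (snd k) then Poly_Mapping.single k 1 else 0) c = lin_ext (\<lambda>k. Poly_Mapping.single k 1) c"
        by (simp only: lin_ext_fun_add[symmetric]) (rule lin_ext_cong, simp)
      then have "lin_ext (\<lambda>k. if sv (snd k) then 0 else Poly_Mapping.single k 1) c = c"
        using P0 by (simp add: lin_ext_id)
      then have "?D (lin_ext hb c) = c"
        using hom_C[OF c] dc by simp
      moreover have "lin_ext hb c \<in> dend_C ?N (Suc 1)" by (rule H_C[OF c])
      ultimately show "c \<in> dend_B ?N dtree_prec dtree_succ 1"
        unfolding dend_B_def by (metis image_eqI)
    qed
  next
    show "dend_B ?N (dtree_prec :: _ \<Rightarrow> _ \<Rightarrow> ('b tree \<Rightarrow>\<^sub>0 'k)) dtree_succ 1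
      \<subseteq> {c \<in> dend_Z ?N (dtree_prec :: _ \<Rightarrow> _ \<Rightarrow> ('b tree \<Rightarrow>\<^sub>0 'k)) dtree_succ 1. (PHI :: _ \<Rightarrow> ('b \<Rightarrow>\<^sub>0 'k)) c = 0}"
    proof
      fix c :: "(nat \<times> 'b tree list) \<Rightarrow>\<^sub>0 'k"
      assume "c \<in> dend_B ?N dtree_prec dtree_succ 1"
      then obtain y where y: "y \<in> dend_C ?N (Suc 1)" and cy: "c = ?D y" by (auto simp: dend_B_def)
      have "c \<in> dend_C ?N 1" using T.D_C[OF y] cy by simp
      moreover have "PHI c = (0 :: 'b \<Rightarrow>\<^sub>0 'k)" using PHI_D2[of y B] y cy by (simp add: numeral_2_eq_2)
      ultimately show "c \<in> {c \<in> dend_Z ?N (dtree_prec :: _ \<Rightarrow> _ \<Rightarrow> ('b tree \<Rightarrow>\<^sub>0 'k)) dtree_succ 1. (PHI :: _ \<Rightarrow> ('b \<Rightarrow>\<^sub>0 'k)) c = 0}"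
        using Z1 by simp
    qed
  qed
  show ?thesis using lin img ker part2 by blast
qed



end
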